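(* Assume $\langle f\rangle_X=0$ and that $\psi$ satisfies (A1) and (A2). Let $u^0$ be the solution of the homogenized problem and $u^H$ the solution of the HQC problem. Then there exist constants $C_4,C_5$, depending only on $c_\psi,C_\psi,C'_\psi$ and $p$ (independent of $\epsilon$, $H$ and $f$), such that \[ |u^H-u^0|_{H^1}\le C_4 H\|f\|_{L^2},\qquad \|u^H-u^0\|_{L^2}\le C_5H^2\|f\|_{L^2}+\|e_{\rm mod}\|_{L^2}. \]
   Context: Let $\epsilon>0$, $N,p$ positive integers with normalization $N\epsilon=1$; $X_i=\epsilon i$, $Y_j=j$. $U^N_{\rm per}(\epsilon\mathbb Z)$: functions $u:\epsilon\mathbb Z\to\mathbb R$ with $u(X_{i+N})=u(X_i)$; $U^N_\#(\epsilon\mathbb Z)$: those with $\langle u\rangle_X:=\frac1N\sum_{i=1}^Nu(X_i)=0$. $\langle u,v\rangle_X=\frac1N\sum_{i=1}^Nu(X_i)v(X_i)$, $Du(X_i)=(u(X_{i+1})-u(X_i))/\epsilon$, $\|u\|_{L^2}=\langle u,u\rangle_X^{1/2}$, $|u|_{H^1}=\|Du\|_{L^2}$. $U^p_\#(\epsilon\mathbb Z)$: $p$-periodic functions on $\epsilon\mathbb Z$ with $\sum_{i=1}^p w(X_i)=0$. Two-scale functions $g:\epsilon\mathbb Z\times\mathbb Z\to\mathbb R$ satisfy $g(X_{i+N},Y_j)=g(X_i,Y_j)=g(X_i,Y_{j+p})$; $D_Xg(X_i,Y_j)=(g(X_{i+1},Y_j)-g(X_i,Y_j))/\epsilon$,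 $\langle g\rangle_Y(X_i)=\frac1p\sum_{j=1}^pg(X_i,Y_j)$, $\|g\|_{L^\infty(N,p)}=\max_{1\le i\le N,1\le j\le p}|g|$. $\psi$ is a two-scale function with (A1) $0<c_\psi\le\psi\le C_\psi$ and (A2) $\|D_X\psi\|_{L^\infty(N,p)}\le C'_\psi$. $\psi^0(X_i)=\langle1/\psi(X_i,\cdot)\rangle_Y^{-1}$. $f\in U^N_{\rm per}(\epsilon\mathbb Z)$. Homogenized problem: $u^0\in U^N_\#(\epsilon\mathbb Z)$ with $\langle\psi^0Du^0,Dv\rangle_X=\langle f,v\rangle_X$ for all $v\in U^N_{\rm per}(\epsilon\mathbb Z)$. HQC method: fix indices $1=i_1<i_2<\dots<i_K\le N$, set $i_{K+1}=N+1$, elements $S_k=\{X_i:i_k\le i<i_{k+1}\}$, $H_k=\epsilon(i_{k+1}-i_k)$, $H=\max_kH_k$. $U^H_{\rm per}$ is the set of $v\in U^N_{\rm per}(\epsilon\mathbb Z)$ that are affine in $X_i$ on each $\{X_i: i_k\le i\le i_{k+1}\}$, and $U^H_\#=U^H_{\rm per}\cap U^N_\#(\epsilon\mathbb Z)$. In each $S_k$ choose a sampling domain $S_k^{\rm rep}=\{X_i: i_k^{\rm rep}\le i<i_k^{\rm rep}+p\}\subset S_k$ and a collocation index $i_k^{\rm coll}$ with $X_{i_k^{\rm coll}}\in S_k^{\rm rep}$; let $\psi^\epsilon_{{\rm coll},k}(X_i)=\psi(X_{i_k^{\rm coll}},X_i/\epsilon)$ and $\langle a,b\rangle_{S_k^{\rm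 rep}}=\frac1p\sum_{X_i\in S_k^{\rm rep}}a(X_i)b(X_i)$. For $v^H\in U^H_{\rm per}$ let $\ell_k$ be the affine function on $\epsilon\mathbb Z$ coinciding with $v^H$ on $S_k$; the reconstruction is $\mathcal R_k(v^H)=\ell_k+w$, where $w\in U^p_\#(\epsilon\mathbb Z)$ satisfies $\langle\psi^\epsilon_{{\rm coll},k}D(\ell_k+w),Ds\rangle_{S_k^{\rm rep}}=0$ for all $s\in U^p_\#(\epsilon\mathbb Z)$. The HQC problem: find $u^H\in U^H_\#$ with $\sum_{k=1}^KH_k\langle\psi^\epsilon_{{\rm coll},k}D\mathcal R_k(u^H),D\mathcal R_k(v^H)\rangle_{S_k^{\rm rep}}=\langle f,v^H\rangle_X$ for all $v^H\in U^H_\#$. Modeling error: $e_{\rm mod}=u^H-\tilde u^H$, where $\tilde u^H\in U^H_\#$ solves $\langle\psi^0D\tilde u^H,Dv^H\rangle_X=\langle f,v^H\rangle_X$ for all $v^H\in U^H_\#$. *)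

theory Defs
  imports Complex_Main
begin

text \<open>Grid functions on eps*Z are represented as functions int => real, u i = u(X_i),
  X_i = eps*i, eps = 1/N.  Two-scale functions as int => int => real, g i j = g(X_i,Y_j), Y_j = j.\<close>

definition eps :: "nat \<Rightarrow> real" where
  "eps N = 1 / real N"

definition Xpt :: "nat \<Rightarrow> int \<Rightarrow> real" where
  "Xpt N i = eps N * real_of_int i"

definition Dd :: "nat \<Rightarrow> (int \<Rightarrow> real) \<Rightarrow> int \<Rightarrow> real" where
  "Dd N u = (\<lambda>i. (u (i + 1) - u i) / eps N)"

definition DX :: "nat \<Rightarrow> (int \<Rightarrow> int \<Rightarrow> real) \<Rightarrow> int \<Rightarrow> int \<Rightarrow> real" where
  "DX N g = (\<lambda>i j. (g (i + 1) j - g i j) / eps N)"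

definition avgX :: "nat \<Rightarrow> (int \<Rightarrow> real) \<Rightarrow> real" where
  "avgX N u = (1 / real N) * (\<Sum>i\<in>{1..int N}. u i)"

definition ipX :: "nat \<Rightarrow> (int \<Rightarrow> real) \<Rightarrow> (int \<Rightarrow> real) \<Rightarrow> real" where
  "ipX N u v = (1 / real N) * (\<Sum>i\<in>{1..int N}. u i * v i)"

definition L2 :: "nat \<Rightarrow> (int \<Rightarrow> real) \<Rightarrow> real" where
  "L2 N u = sqrt (ipX N u u)"

definition H1semi :: "nat \<Rightarrow> (int \<Rightarrow> real) \<Rightarrow> real" where
  "H1semi N u = L2 N (Dd N u)"

definition Linf2 :: "nat \<Rightarrow> nat \<Rightarrow> (int \<Rightarrow> int \<Rightarrow> real) \<Rightarrow> real" where
  "Linf2 N p g = Max {\<bar>g i j\<bar> | i j. i \<in> {1..int N} \<and> j \<in> {1..int p}}"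

definition Uper :: "nat \<Rightarrow> (int \<Rightarrow> real) set" where
  "Uper N = {u. \<forall>i. u (i + int N) = u i}"

definition Usharp :: "nat \<Rightarrow> (int \<Rightarrow> real) set" where
  "Usharp N = {u \<in> Uper N. avgX N u = 0}"

definition Upsharp :: "nat \<Rightarrow> (int \<Rightarrow> real) set" where
  "Upsharp p = {w. (\<forall>i. w (i + int p) = w i) \<and> (\<Sum>i\<in>{1..int p}. w i) = 0}"

definition avgY :: "nat \<Rightarrow> (int \<Rightarrow> int \<Rightarrow> real) \<Rightarrow> int \<Rightarrow> real" where
  "avgY p g i = (1 / real p) * (\<Sum>j\<in>{1..int p}. g i j)"

definition psi0 :: "nat \<Rightarrow> (int \<Rightarrow> int \<Rightarrow> real) \<Rightarrow> int \<Rightarrow> real" where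
  "psi0 p psi i = inverse (avgY p (\<lambda>i j. 1 / psi i j) i)"

definition valid_mesh :: "nat \<Rightarrow> nat \<Rightarrow> (nat \<Rightarrow> int) \<Rightarrow> bool" where
  "valid_mesh N K idx \<longleftrightarrow> K \<ge> 1 \<and> idx 1 = 1 \<and> (\<forall>k\<in>{1..<K}. idx k < idx (Suc k))
     \<and> idx K \<le> int N \<and> idx (Suc K) = int N + 1"

definition Hk :: "nat \<Rightarrow> (nat \<Rightarrow> int) \<Rightarrow> nat \<Rightarrow> real" where
  "Hk N idx k = eps N * real_of_int (idx (Suc k) - idx k)"

definition Hmax :: "nat \<Rightarrow> nat \<Rightarrow> (nat \<Rightarrow> int) \<Rightarrow> real" where
  "Hmax N K idx = Max (Hk N idx ` {1..K})"

text \<open>Sampling domains S_k^rep = {rep k ..< rep k + p} inside S_k = {idx k ..< idx (k+1)},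
  collocation index coll k in S_k^rep.\<close>
definition valid_sampling :: "nat \<Rightarrow> nat \<Rightarrow> (nat \<Rightarrow> int) \<Rightarrow> (nat \<Rightarrow> int) \<Rightarrow> (nat \<Rightarrow> int) \<Rightarrow> bool" where
  "valid_sampling p K idx rep coll \<longleftrightarrow>
     (\<forall>k\<in>{1..K}. idx k \<le> rep k \<and> rep k + int p \<le> idx (Suc k)
                 \<and> rep k \<le> coll k \<and> coll k < rep k + int p)"

definition is_affine_on :: "nat \<Rightarrow> (int \<Rightarrow> real) \<Rightarrow> int set \<Rightarrow> bool" where
  "is_affine_on N v A \<longleftrightarrow> (\<exists>a b. \<forall>i\<in>A. v i = a + b * Xpt N i)"

definition UHper :: "nat \<Rightarrow> nat \<Rightarrow> (nat \<Rightarrow> int) \<Rightarrow> (int \<Rightarrow> real) set" where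
  "UHper N K idx = {v \<in> Uper N. \<forall>k\<in>{1..K}. is_affine_on N v {idx k..idx (Suc k)}}"

definition UHsharp :: "nat \<Rightarrow> nat \<Rightarrow> (nat \<Rightarrow> int) \<Rightarrow> (int \<Rightarrow> real) set" where
  "UHsharp N K idx = UHper N K idx \<inter> Usharp N"

definition ipRep :: "nat \<Rightarrow> int \<Rightarrow> (int \<Rightarrow> real) \<Rightarrow> (int \<Rightarrow> real) \<Rightarrow> real" where
  "ipRep p r a b = (1 / real p) * (\<Sum>i\<in>{r..<r + int p}. a i * b i)"

text \<open>psi^eps_{coll,k}(X_i) = psi(X_{coll k}, X_i / eps) = psi(X_{coll k}, Y_i).\<close>
definition psi_coll :: "(int \<Rightarrow> int \<Rightarrow> real) \<Rightarrow> (nat \<Rightarrow> int) \<Rightarrow> nat \<Rightarrow> int \<Rightarrow> real" where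
  "psi_coll psi coll k = (\<lambda>i. psi (coll k) i)"

definition ell :: "nat \<Rightarrow> (nat \<Rightarrow> int) \<Rightarrow> nat \<Rightarrow> (int \<Rightarrow> real) \<Rightarrow> int \<Rightarrow> real" where
  "ell N idx k v = (THE l. (\<exists>a b. \<forall>i. l i = a + b * Xpt N i)
                          \<and> (\<forall>i\<in>{idx k..idx (Suc k)}. l i = v i))"

definition cellw :: "nat \<Rightarrow> nat \<Rightarrow> (int \<Rightarrow> int \<Rightarrow> real) \<Rightarrow> (nat \<Rightarrow> int) \<Rightarrow> (nat \<Rightarrow> int)
    \<Rightarrow> (nat \<Rightarrow> int) \<Rightarrow> nat \<Rightarrow> (int \<Rightarrow> real) \<Rightarrow> int \<Rightarrow> real" where
  "cellw N p psi idx rep coll k v = (THE w. w \<in> Upsharp p \<and>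
      (\<forall>s\<in>Upsharp p. ipRep p (rep k)
          (\<lambda>i. psi_coll psi coll k i * Dd N (\<lambda>j. ell N idx k v j + w j) i) (Dd N s) = 0))"

definition Rk :: "nat \<Rightarrow> nat \<Rightarrow> (int \<Rightarrow> int \<Rightarrow> real) \<Rightarrow> (nat \<Rightarrow> int) \<Rightarrow> (nat \<Rightarrow> int)
    \<Rightarrow> (nat \<Rightarrow> int) \<Rightarrow> nat \<Rightarrow> (int \<Rightarrow> real) \<Rightarrow> int \<Rightarrow> real" where
  "Rk N p psi idx rep coll k v = (\<lambda>i. ell N idx k v i + cellw N p psi idx rep coll k v i)"

definition BHQC :: "nat \<Rightarrow> nat \<Rightarrow> (int \<Rightarrow> int \<Rightarrow> real) \<Rightarrow> nat \<Rightarrow> (nat \<Rightarrow> int) \<Rightarrow> (nat \<Rightarrow> int)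
    \<Rightarrow> (nat \<Rightarrow> int) \<Rightarrow> (int \<Rightarrow> real) \<Rightarrow> (int \<Rightarrow> real) \<Rightarrow> real" where
  "BHQC N p psi K idx rep coll u v = (\<Sum>k\<in>{1..K}. Hk N idx k *
      ipRep p (rep k) (\<lambda>i. psi_coll psi coll k i * Dd N (Rk N p psi idx rep coll k u) i)
                      (Dd N (Rk N p psi idx rep coll k v)))"

end

theory Submission
  imports Defs "HOL-Analysis.L2_Norm" "HOL-Analysis.Convex"
begin



lemma win_reindex:
  "(\<Sum>i\<in>{r..<r+int q}. h i) = (\<Sum>n<q. h (r + int n))"
proof -
  have "bij_betw (\<lambda>n. r + int n) {..<q} {r..<r+int q}"
    unfolding bij_betw_def
  proof
    show "inj_on (\<lambda>n. r + int n) {..<q}" by (auto simp: inj_on_def)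
    show "(\<lambda>n. r + int n) ` {..<q} = {r..<r + int q}"
    proof
      show "{r..<r + int q} \<subseteq> (\<lambda>n. r + int n) ` {..<q}"
      proof
        fix x assume "x \<in> {r..<r + int q}"
        then have "x = r + int (nat (x - r))" "nat (x - r) < q" by auto
        then show "x \<in> (\<lambda>n. r + int n) ` {..<q}" by blast
      qed
    qed auto
  qed
  then show ?thesis by (simp add: sum.reindex_bij_betw[symmetric])
qed

lemma win_telescope:
  "(\<Sum>i\<in>{r..<r+int q}. v (i+1) - v i) = v (r + int q) - (v r :: real)"
proof -
  have "(\<Sum>i\<in>{r..<r+int q}. v (i+1) - v i) = (\<Sum>n<q. v (r + int (Suc n)) - v (r + int n))"
    by (simp add: win_reindex ac_simps)
  also have "\<dots> = v (r + int q) - v r"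
    by (subst sum_lessThan_telescope[where f="\<lambda>n. v (r + int n)"]) simp
  finally show ?thesis .
qed

lemma periodic_shift:
  fixes g :: "int \<Rightarrow> 'a"
  assumes "\<forall>i. g (i + int q) = g i"
  shows "g (x + int q * n) = g x"
proof (induction n rule: int_induct[where k=0])
  case base then show ?case by simp
next
  case (step1 i)
  have "g (x + int q * (i+1)) = g ((x + int q * i) + int q)" by (simp add: algebra_simps)
  then show ?case using assms step1 by simp
next
  case (step2 i)
  have "g (x + int q * i) = g ((x + int q * (i - 1)) + int q)" by (simp add: algebra_simps)
  then show ?case using assms step2 by simp
qed

lemma periodic_mod:
  fixes g :: "int \<Rightarrow> 'a"
  assumes "\<forall>i. g (i + int q) = g i"
  shows "g (r + (x - r) mod int q) = g x"
proof -
  have "x = (r + (x - r) mod int q) + int q * ((x - r) div int q)" by simp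
  then show ?thesis using periodic_shift[OF assms, of "r + (x - r) mod int q" "(x - r) div int q"] by metis
qed

lemma sum_window_periodic:
  fixes g :: "int \<Rightarrow> real"
  assumes "\<forall>i. g (i + int q) = g i"
  shows "(\<Sum>i\<in>{r..<r+int q}. g i) = (\<Sum>i\<in>{s..<s+int q}. g i)"
proof -
  define F where "F r = (\<Sum>i\<in>{r..<r+int q}. g i)" for r
  have step: "F (r+1) = F r" for r
  proof -
    have "F (r+1) - F r = (\<Sum>n<q. g (r + int n + 1) - g (r + int n))"
      unfolding F_def win_reindex by (simp add: sum_subtractf algebra_simps)
    also have "\<dots> = (\<Sum>i\<in>{r..<r+int q}. g (i+1) - g i)" by (simp add: win_reindex)
    also have "\<dots> = 0" using win_telescope[where v=g and r=r and q=q] assms by simp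
    finally show ?thesis by simp
  qed
  have "F x = F 0" for x
  proof (induction x rule: int_induct[where k=0])
    case (step1 i) then show ?case using step by simp
  next
    case (step2 i) then show ?case using step[of "i-1"] by simp
  qed simp
  then show ?thesis unfolding F_def by metis
qed




lemma sum_upto_step: "r \<le> (i::int) \<Longrightarrow> (\<Sum>l\<in>{r..<i+1}. g l) = (\<Sum>l\<in>{r..<i}. g l) + (g i :: real)"
proof -
  assume "r \<le> i"
  then have "{r..<i+1} = insert i {r..<i}" by auto
  then show ?thesis by simp
qed

lemma antideriv:
  fixes g :: "int \<Rightarrow> real"
  assumes q: "q > 0" and s0: "(\<Sum>i\<in>{r..<r+int q}. g i) = 0"
  shows "\<exists>v. (\<forall>i. v (i + int q) = v i) \<and> (\<forall>i\<in>{r..r+int q}. v i = e * (\<Sum>l\<in>{r..<i}. g l))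
            \<and> (\<forall>i\<in>{r..<r+int q}. v (i+1) - v i = e * g i)"
proof -
  define v where "v i = e * (\<Sum>l\<in>{r..<r + (i - r) mod int q}. g l)" for i
  have per: "v (i + int q) = v i" for i
  proof -
    have "(i + int q - r) mod int q = (i - r) mod int q"
      by (metis add.commute add_diff_eq mod_add_self1)
    then show ?thesis unfolding v_def by simp
  qed
  have val: "v i = e * (\<Sum>l\<in>{r..<i}. g l)" if "i \<in> {r..r+int q}" for i
  proof (cases "i = r + int q")
    case True
    then show ?thesis using s0 unfolding v_def by simp
  next
    case False
    then have "(i - r) mod int q = i - r" using that by (intro mod_pos_pos_trivial) auto
    then show ?thesis unfolding v_def by simp
  qed
  have stp: "v (i+1) - v i = e * g i" if "i \<in> {r..<r+int q}" for i
  proof -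
    have "v (i+1) = e * (\<Sum>l\<in>{r..<i+1}. g l)" using that by (intro val) auto
    moreover have "v i = e * (\<Sum>l\<in>{r..<i}. g l)" using that by (intro val) auto
    moreover have "(\<Sum>l\<in>{r..<i+1}. g l) = (\<Sum>l\<in>{r..<i}. g l) + g i"
      using that by (intro sum_upto_step) auto
    ultimately show ?thesis by (simp add: algebra_simps)
  qed
  show ?thesis using per val stp by blast
qed




abbreviation II :: "nat \<Rightarrow> int set" where "II N \<equiv> {1..int N}"

lemma eps_pos: "N > 0 \<Longrightarrow> eps N > 0" by (simp add: eps_def)
lemma eps_N: "N > 0 \<Longrightarrow> eps N * real N = 1" by (simp add: eps_def)

lemma ipX_cong: "(\<And>i. i \<in> II N \<Longrightarrow> u i = u' i) \<Longrightarrow> (\<And>i. i \<in> II N \<Longrightarrow> v i = v' i)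
  \<Longrightarrow> ipX N u v = ipX N u' v'"
  unfolding ipX_def by (intro arg_cong[where f="\<lambda>x. _ * x"] sum.cong) auto

lemma L2_cong: "(\<And>i. i \<in> II N \<Longrightarrow> u i = u' i) \<Longrightarrow> L2 N u = L2 N u'"
  unfolding L2_def using ipX_cong[of N u u' u u'] by simp

lemma ipX_self_nonneg: "ipX N u u \<ge> 0"
  unfolding ipX_def by (auto intro!: sum_nonneg divide_nonneg_nonneg)

lemma L2_nonneg: "L2 N u \<ge> 0" unfolding L2_def using ipX_self_nonneg by simp

lemma L2_sq: "(L2 N u)^2 = ipX N u u" unfolding L2_def using ipX_self_nonneg by simp

lemma L2_as_set: "L2 N u = sqrt (1 / real N) * L2_set u (II N)"
  unfolding L2_def ipX_def L2_set_def by (simp add: real_sqrt_divide power2_eq_square)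

lemma ipX_CS: "\<bar>ipX N u v\<bar> \<le> L2 N u * L2 N v"
proof -
  have "\<bar>ipX N u v\<bar> = (1 / real N) * \<bar>\<Sum>i\<in>II N. u i * v i\<bar>" unfolding ipX_def by (simp add: abs_mult)
  also have "\<dots> \<le> (1 / real N) * (\<Sum>i\<in>II N. \<bar>u i\<bar> * \<bar>v i\<bar>)"
    by (intro mult_left_mono) (auto simp: abs_mult[symmetric] sum_abs)
  also have "\<dots> \<le> (1 / real N) * (L2_set u (II N) * L2_set v (II N))"
    by (intro mult_left_mono L2_set_mult_ineq) auto
  also have "\<dots> = L2 N u * L2 N v"
  proof -
    have "sqrt (1 / real N) * sqrt (1 / real N) = 1 / real N" by simp
    then show ?thesis unfolding L2_as_set by (metis (no_types, lifting) mult.assoc mult.left_commute)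
  qed
  finally show ?thesis .
qed

lemma ipX_CS': "ipX N u v \<le> L2 N u * L2 N v"
  using ipX_CS[of N u v] by simp

lemma L2_triangle: "L2 N (\<lambda>i. u i + v i) \<le> L2 N u + L2 N v"
  unfolding L2_as_set
  by (metis L2_set_triangle_ineq distrib_left mult_left_mono real_sqrt_ge_zero
      zero_le_divide_1_iff of_nat_0_le_iff)

lemma L2_minus: "L2 N (\<lambda>i. - u i) = L2 N u"
  unfolding L2_def ipX_def by simp

lemma L2_triangle_diff: "L2 N (\<lambda>i. u i - v i) \<le> L2 N u + L2 N v"
  using L2_triangle[of N u "\<lambda>i. - v i"] L2_minus[of N v] by simp

lemma L2_mono_pw:
  assumes "\<And>i. i \<in> II N \<Longrightarrow> \<bar>u i\<bar> \<le> k * \<bar>v i\<bar>" "k \<ge> 0"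
  shows "L2 N u \<le> k * L2 N v"
proof -
  have "ipX N u u \<le> k^2 * ipX N v v"
    unfolding ipX_def
  proof -
    have "(\<Sum>i\<in>II N. u i * u i) \<le> (\<Sum>i\<in>II N. k^2 * (v i * v i))"
    proof (intro sum_mono)
      fix i assume "i \<in> II N"
      then have "\<bar>u i\<bar> \<le> k * \<bar>v i\<bar>" using assms by auto
      then have "\<bar>u i\<bar> * \<bar>u i\<bar> \<le> (k * \<bar>v i\<bar>) * (k * \<bar>v i\<bar>)" by (intro mult_mono) auto
      then show "u i * u i \<le> k^2 * (v i * v i)" by (simp add: power2_eq_square abs_mult[symmetric] algebra_simps)
    qed
    then show "1 / real N * (\<Sum>i\<in>II N. u i * u i) \<le> k\<^sup>2 * (1 / real N * (\<Sum>i\<in>II N. v i * v i))"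
      by (simp add: sum_distrib_left[symmetric] divide_right_mono)
  qed
  then have "sqrt (ipX N u u) \<le> sqrt (k^2 * ipX N v v)" by simp
  then show ?thesis unfolding L2_def using assms(2) by (simp add: real_sqrt_mult)
qed

lemma L2_bound_const:
  assumes "N > 0" "\<And>i. i \<in> II N \<Longrightarrow> \<bar>u i\<bar> \<le> M"
  shows "L2 N u \<le> M"
proof -
  have "(1::int) \<in> II N" using assms(1) by simp
  then have "\<bar>u 1\<bar> \<le> M" by (rule assms(2))
  then have M: "M \<ge> 0" by (meson abs_ge_zero order_trans)
  have "L2 N u \<le> M * L2 N (\<lambda>_. 1)" using assms M by (intro L2_mono_pw) auto
  moreover have "L2 N (\<lambda>_. 1) = 1" unfolding L2_def ipX_def using assms(1) by simp
  ultimately show ?thesis by simp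
qed

lemma L2_const: "N > 0 \<Longrightarrow> L2 N (\<lambda>_. t) = \<bar>t\<bar>"
  unfolding L2_def ipX_def by (simp add: power2_eq_square[symmetric])

lemma L2_scale: "L2 N (\<lambda>i. k * u i) = \<bar>k\<bar> * L2 N u"
proof -
  have "ipX N (\<lambda>i. k * u i) (\<lambda>i. k * u i) = k^2 * ipX N u u"
    unfolding ipX_def by (simp add: sum_distrib_left algebra_simps power2_eq_square)
  then show ?thesis unfolding L2_def by (simp add: real_sqrt_mult)
qed

lemma L2_le_from_sq: "ipX N u u \<le> B^2 \<Longrightarrow> B \<ge> 0 \<Longrightarrow> L2 N u \<le> B"
  unfolding L2_def by (metis real_sqrt_abs real_sqrt_le_mono abs_of_nonneg)

lemma avg_abs_le_L2:
  "(1 / real N) * (\<Sum>i\<in>II N. \<bar>u i\<bar>) \<le> L2 N u"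
proof (cases "N = 0")
  case True then show ?thesis using L2_nonneg[of N u] by simp
next
  case False
  have "ipX N (\<lambda>i. \<bar>u i\<bar>) (\<lambda>_. 1) \<le> L2 N (\<lambda>i. \<bar>u i\<bar>) * L2 N (\<lambda>_. 1)" by (rule ipX_CS')
  moreover have "L2 N (\<lambda>_. 1) = 1" using L2_const[of N 1] False by simp
  moreover have "L2 N (\<lambda>i. \<bar>u i\<bar>) = L2 N u" unfolding L2_def ipX_def by (simp add: abs_mult[symmetric])
  ultimately show ?thesis unfolding ipX_def by simp
qed

lemma ipX_diff_left: "ipX N (\<lambda>i. u i - w i) v = ipX N u v - ipX N w v"
  unfolding ipX_def by (simp add: algebra_simps sum_subtractf)
lemma ipX_diff_right: "ipX N v (\<lambda>i. u i - w i) = ipX N v u - ipX N v w"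
  unfolding ipX_def by (simp add: algebra_simps sum_subtractf)
lemma ipX_comm: "ipX N u v = ipX N v u"
  unfolding ipX_def by (simp add: mult.commute)




abbreviation SS :: "(nat \<Rightarrow> int) \<Rightarrow> nat \<Rightarrow> int set" where "SS idx k \<equiv> {idx k..<idx (Suc k)}"

lemma mesh_step: "valid_mesh N K idx \<Longrightarrow> k \<in> {1..K} \<Longrightarrow> idx k < idx (Suc k)"
proof -
  assume m: "valid_mesh N K idx" and k: "k \<in> {1..K}"
  show ?thesis
  proof (cases "k = K")
    case True then show ?thesis using m unfolding valid_mesh_def by simp
  next
    case False then have "k \<in> {1..<K}" using k by simp
    then show ?thesis using m unfolding valid_mesh_def by blast
  qed
qed

lemma mesh_mono: assumes "valid_mesh N K idx" "1 \<le> k" "k \<le> l" "l \<le> Suc K"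
  shows "idx k \<le> idx l"
  using assms(3,4)
proof (induction l)
  case 0 then show ?case by simp
next
  case (Suc l)
  show ?case
  proof (cases "k = Suc l")
    case False
    then have "k \<le> l" using Suc by simp
    then have "idx k \<le> idx l" using Suc by simp
    moreover have "idx l < idx (Suc l)" using mesh_step[OF assms(1), of l] Suc \<open>k \<le> l\<close> assms(2) by simp
    ultimately show ?thesis by simp
  qed simp
qed

lemma mesh_first: "valid_mesh N K idx \<Longrightarrow> idx 1 = 1" unfolding valid_mesh_def by simp
lemma mesh_last: "valid_mesh N K idx \<Longrightarrow> idx (Suc K) = int N + 1" unfolding valid_mesh_def by simp
lemma mesh_K: "valid_mesh N K idx \<Longrightarrow> K \<ge> 1" unfolding valid_mesh_def by simp

lemma mesh_range: assumes "valid_mesh N K idx" "1 \<le> k" "k \<le> Suc K"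
  shows "1 \<le> idx k" "idx k \<le> int N + 1"
  using mesh_mono[OF assms(1) order_refl assms(2)] mesh_mono[OF assms(1) assms(2) assms(3) order_refl]
    mesh_first[OF assms(1)] mesh_last[OF assms(1)] assms by auto

lemma elem_sub: "valid_mesh N K idx \<Longrightarrow> k \<in> {1..K} \<Longrightarrow> SS idx k \<subseteq> II N"
  using mesh_range[of N K idx k] mesh_range[of N K idx "Suc k"] by auto

lemma sum_split:
  assumes m: "valid_mesh N K idx"
  shows "(\<Sum>i\<in>II N. h i) = (\<Sum>k\<in>{1..K}. \<Sum>i\<in>SS idx k. (h i :: real))"
proof -
  have "m \<le> K \<Longrightarrow> (\<Sum>k\<in>{1..m}. \<Sum>i\<in>SS idx k. h i) = (\<Sum>i\<in>{1..<idx (Suc m)}. h i)" for m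
  proof (induction m)
    case 0 then show ?case using mesh_first[OF m] by simp
  next
    case (Suc m)
    have a: "1 \<le> idx (Suc m)" "idx (Suc m) \<le> idx (Suc (Suc m))"
      using mesh_range[OF m, of "Suc m"] mesh_mono[OF m, of "Suc m" "Suc (Suc m)"] Suc.prems by auto
    have "{1..<idx (Suc (Suc m))} = {1..<idx (Suc m)} \<union> SS idx (Suc m)" using a by auto
    moreover have "{1..<idx (Suc m)} \<inter> SS idx (Suc m) = {}" by auto
    ultimately have "(\<Sum>i\<in>{1..<idx (Suc (Suc m))}. h i) = (\<Sum>i\<in>{1..<idx (Suc m)}. h i) + (\<Sum>i\<in>SS idx (Suc m). h i)"
      by (simp add: sum.union_disjoint)
    then show ?case using Suc by simp
  qed
  from this[of K] show ?thesis using mesh_last[OF m]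
    by (simp add: atLeastLessThanPlusOne_atLeastAtMost_int)
qed

definition pc :: "nat \<Rightarrow> (nat \<Rightarrow> int) \<Rightarrow> (nat \<Rightarrow> real) \<Rightarrow> int \<Rightarrow> real" where
  "pc K idx c i = (\<Sum>k\<in>{1..K}. if idx k \<le> i \<and> i < idx (Suc k) then c k else 0)"

lemma pc_diff: "pc K idx (\<lambda>k. x k - y k) i = pc K idx x i - pc K idx y i"
  unfolding pc_def by (simp add: sum_subtractf[symmetric] if_distrib cong: if_cong)

lemma pc_eq: assumes m: "valid_mesh N K idx" and k: "k \<in> {1..K}" and i: "i \<in> SS idx k"
  shows "pc K idx c i = c k"
proof -
  have "(if idx k' \<le> i \<and> i < idx (Suc k') then c k' else 0) = (if k' = k then c k else 0)"
    if "k' \<in> {1..K}" for k'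
  proof (cases "k' = k")
    case False
    show ?thesis
    proof (cases "k' < k")
      case True
      then have "idx (Suc k') \<le> idx k" using mesh_mono[OF m, of "Suc k'" k] k by auto
      then show ?thesis using i False by auto
    next
      case False
      then have "Suc k \<le> k'" using \<open>k' \<noteq> k\<close> by simp
      then have "idx (Suc k) \<le> idx k'" using mesh_mono[OF m, of "Suc k" k'] that by auto
      then show ?thesis using i \<open>k' \<noteq> k\<close> by auto
    qed
  qed (use i in auto)
  then have "pc K idx c i = (\<Sum>k'\<in>{1..K}. if k' = k then c k else 0)"
    unfolding pc_def by (intro sum.cong) auto
  also have "\<dots> = c k" using k by simp
  finally show ?thesis .
qed

lemma elem_count: assumes m: "valid_mesh N K idx" and i: "i \<in> II N"
  shows "(\<Sum>k\<in>{1..K}. if idx k \<le> i \<and> i < idx (Suc k) then 1 else 0) = (1::real)"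
proof -
  have "(\<Sum>j\<in>II N. if j = i then 1 else 0) = (1::real)" using i by simp
  also have "(\<Sum>j\<in>II N. if j = i then 1 else 0) = (\<Sum>k\<in>{1..K}. \<Sum>j\<in>SS idx k. if j = i then 1 else (0::real))"
    by (rule sum_split[OF m])
  also have "\<dots> = (\<Sum>k\<in>{1..K}. if idx k \<le> i \<and> i < idx (Suc k) then 1 else 0)"
    by (intro sum.cong) auto
  finally show ?thesis by simp
qed

lemma elem_exists: assumes m: "valid_mesh N K idx" and i: "i \<in> II N"
  shows "\<exists>k\<in>{1..K}. i \<in> SS idx k"
proof (rule ccontr)
  assume "\<not> ?thesis"
  then have "(\<Sum>k\<in>{1..K}. if idx k \<le> i \<and> i < idx (Suc k) then 1 else 0) = (0::real)"
    by (intro sum.neutral) auto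
  then show False using elem_count[OF m i] by simp
qed

lemma pc_const: "valid_mesh N K idx \<Longrightarrow> i \<in> II N \<Longrightarrow> pc K idx (\<lambda>_. t) i = t"
  using elem_exists pc_eq by blast

lemma sum_pc: assumes m: "valid_mesh N K idx"
  shows "(\<Sum>i\<in>II N. pc K idx c i * h i) = (\<Sum>k\<in>{1..K}. c k * (\<Sum>i\<in>SS idx k. h i))"
  unfolding sum_split[OF m]
  by (intro sum.cong refl) (simp add: sum_distrib_left pc_eq[OF m])

lemma card_elem: assumes m: "valid_mesh N K idx" and k: "k \<in> {1..K}"
  shows "(\<Sum>i\<in>SS idx k. (1::real)) = real_of_int (idx (Suc k) - idx k)"
  using mesh_step[OF m k] by simp

lemma Hk_card: assumes m: "valid_mesh N K idx" and k: "k \<in> {1..K}"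
  shows "Hk N idx k = eps N * (\<Sum>i\<in>SS idx k. (1::real))"
  unfolding Hk_def card_elem[OF m k] ..

lemma Hk_le_Hmax: "k \<in> {1..K} \<Longrightarrow> Hk N idx k \<le> Hmax N K idx"
  unfolding Hmax_def by (intro Max_ge) auto

lemma Hk_nonneg: "valid_mesh N K idx \<Longrightarrow> k \<in> {1..K} \<Longrightarrow> Hk N idx k \<ge> 0"
  unfolding Hk_def eps_def using mesh_step[of N K idx k] by simp

lemma Hmax_nonneg: "valid_mesh N K idx \<Longrightarrow> Hmax N K idx \<ge> 0"
  using Hk_nonneg[of N K idx 1] Hk_le_Hmax[of 1 K N idx] mesh_K[of N K idx] by fastforce

lemma sum_Hk: assumes m: "valid_mesh N K idx" and N: "N > 0"
  shows "(\<Sum>k\<in>{1..K}. Hk N idx k) = 1"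
proof -
  have "(\<Sum>k\<in>{1..K}. Hk N idx k) = eps N * (\<Sum>k\<in>{1..K}. \<Sum>i\<in>SS idx k. (1::real))"
    by (simp add: Hk_card[OF m] sum_distrib_left)
  also have "\<dots> = eps N * (\<Sum>i\<in>II N. 1)" by (metis sum_split[OF m])
  also have "\<dots> = 1" using N by (simp add: eps_def)
  finally show ?thesis .
qed




lemma avgY_bounds:
  assumes p: "p > 0" and lo: "\<And>j. lo \<le> g j" and hi: "\<And>j. g j \<le> hi"
  shows "lo \<le> (1 / real p) * (\<Sum>j\<in>{1..int p}. g j)" "(1 / real p) * (\<Sum>j\<in>{1..int p}. g j) \<le> hi"
proof -
  have "(\<Sum>j\<in>{1..int p}. lo) \<le> (\<Sum>j\<in>{1..int p}. g j)" using lo by (intro sum_mono) auto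
  then have "real p * lo \<le> (\<Sum>j\<in>{1..int p}. g j)" by simp
  then show "lo \<le> (1 / real p) * (\<Sum>j\<in>{1..int p}. g j)" using p by (simp add: field_simps)
  have "(\<Sum>j\<in>{1..int p}. g j) \<le> (\<Sum>j\<in>{1..int p}. hi)" using hi by (intro sum_mono) auto
  then have "(\<Sum>j\<in>{1..int p}. g j) \<le> real p * hi" by simp
  then show "(1 / real p) * (\<Sum>j\<in>{1..int p}. g j) \<le> hi" using p by (simp add: field_simps)
qed

lemma M_bounds:
  assumes p: "p > 0" and c: "c > 0" and b: "\<forall>i j. c \<le> psi i j \<and> psi i j \<le> C"
  shows "1 / C \<le> avgY p (\<lambda>i j. 1 / psi i j) i" "avgY p (\<lambda>i j. 1 / psi i j) i \<le> 1 / c"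
proof -
  have "1 / C \<le> 1 / psi i j" for j
  proof -
    have "c \<le> psi i j" "psi i j \<le> C" using b by auto
    then have "0 < C * psi i j" using c by (intro mult_pos_pos) auto
    then show ?thesis using \<open>psi i j \<le> C\<close> by (intro divide_left_mono) auto
  qed
  moreover have "1 / psi i j \<le> 1 / c" for j
  proof -
    have "c \<le> psi i j" using b by auto
    then have "0 < psi i j * c" using c by (intro mult_pos_pos) auto
    then show ?thesis using \<open>c \<le> psi i j\<close> by (intro divide_left_mono) auto
  qed
  ultimately show "1 / C \<le> avgY p (\<lambda>i j. 1 / psi i j) i" "avgY p (\<lambda>i j. 1 / psi i j) i \<le> 1 / c"
    unfolding avgY_def using avgY_bounds[OF p, of "1/C" "\<lambda>j. 1 / psi i j" "1/c"] by auto
qed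

lemma psi0_bounds:
  assumes p: "p > 0" and c: "c > 0" and b: "\<forall>i j. c \<le> psi i j \<and> psi i j \<le> C"
  shows "c \<le> psi0 p psi i" "psi0 p psi i \<le> C"
proof -
  have C: "C > 0" using b c by (meson order_less_le_trans)
  note M = M_bounds[OF p c b, of i]
  define m where "m = avgY p (\<lambda>i j. 1 / psi i j) i"
  have m: "1/C \<le> m" "m \<le> 1/c" using M unfolding m_def by auto
  have mpos: "m > 0" using m(1) C by (meson order_less_le_trans zero_less_divide_1_iff)
  show "c \<le> psi0 p psi i" unfolding psi0_def m_def[symmetric]
    using m(2) mpos c by (simp add: field_simps)
  show "psi0 p psi i \<le> C" unfolding psi0_def m_def[symmetric]
    using m(1) mpos C by (simp add: field_simps)
qed

lemma Linf2_le:
  assumes "i \<in> {1..int N}" "j \<in> {1..int p}"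
  shows "\<bar>g i j\<bar> \<le> Linf2 N p g"
  unfolding Linf2_def
proof (rule Max_ge)
  show "finite {\<bar>g i j\<bar> |i j. i \<in> {1..int N} \<and> j \<in> {1..int p}}"
    by (rule finite_image_set2) auto
  show "\<bar>g i j\<bar> \<in> {\<bar>g i j\<bar> |i j. i \<in> {1..int N} \<and> j \<in> {1..int p}}" using assms by blast
qed

lemma psi_step:
  assumes N: "N > 0" and p: "p > 0"
    and per: "\<forall>i j. psi (i + int N) j = psi i j \<and> psi i (j + int p) = psi i j"
    and lin: "Linf2 N p (DX N psi) \<le> C'"
  shows "\<bar>psi (i+1) j - psi i j\<bar> \<le> eps N * C'"
proof -
  define i' where "i' = 1 + (i - 1) mod int N"
  define j' where "j' = 1 + (j - 1) mod int p"
  have "(i-1) mod int N < int N" "(i-1) mod int N \<ge> 0" using N by auto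
  then have i': "i' \<in> {1..int N}" unfolding i'_def by auto
  have "(j-1) mod int p < int p" "(j-1) mod int p \<ge> 0" using p by auto
  then have j': "j' \<in> {1..int p}" unfolding j'_def by auto
  have e1: "psi i' j' = psi i j"
  proof -
    have "psi i' j' = psi i j'" unfolding i'_def
      by (rule periodic_mod[where g="\<lambda>x. psi x j'"]) (use per in auto)
    also have "\<dots> = psi i j" unfolding j'_def
      by (rule periodic_mod[where g="\<lambda>y. psi i y"]) (use per in auto)
    finally show ?thesis .
  qed
  have e2: "psi (i'+1) j' = psi (i+1) j"
  proof -
    have "psi (i'+1) j' = psi (i+1) j'" unfolding i'_def
    proof (rule periodic_mod[where g="\<lambda>x. psi (x+1) j'"], intro allI)
      fix x have "x + int N + 1 = (x+1) + int N" by simp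
      then show "psi (x + int N + 1) j' = psi (x + 1) j'" using per by metis
    qed
    also have "\<dots> = psi (i+1) j" unfolding j'_def
      by (rule periodic_mod[where g="\<lambda>y. psi (i+1) y"]) (use per in auto)
    finally show ?thesis .
  qed
  have "\<bar>DX N psi i' j'\<bar> \<le> C'" using Linf2_le[OF i' j', of "DX N psi"] lin by simp
  then have "\<bar>psi (i+1) j - psi i j\<bar> / eps N \<le> C'"
    unfolding DX_def e1 e2 using eps_pos[OF N] by simp
  then show ?thesis using eps_pos[OF N] by (simp add: field_simps)
qed

lemma inv_diff_bound:
  fixes x y c :: real
  assumes "x \<ge> c" "y \<ge> c" "c > 0"
  shows "\<bar>1/x - 1/y\<bar> \<le> \<bar>x - y\<bar> / c^2"
proof -
  have xy1: "x > 0" using assms(1,3) by linarith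
  have xy2: "y > 0" using assms(2,3) by linarith
  note xy = xy1 xy2
  have "\<bar>1/x - 1/y\<bar> = \<bar>x - y\<bar> / (x*y)" using xy by (simp add: field_simps abs_div)
  also have "\<dots> \<le> \<bar>x - y\<bar> / c^2"
    using assms by (intro divide_left_mono) (auto simp: power2_eq_square intro: mult_mono)
  finally show ?thesis .
qed

lemma psi0_step:
  assumes N: "N > 0" and p: "p > 0" and c: "c > 0" and b: "\<forall>i j. c \<le> psi i j \<and> psi i j \<le> C"
    and per: "\<forall>i j. psi (i + int N) j = psi i j \<and> psi i (j + int p) = psi i j"
    and lin: "Linf2 N p (DX N psi) \<le> C'"
  shows "\<bar>psi0 p psi (i+1) - psi0 p psi i\<bar> \<le> eps N * (C' * C^2 / c^2)"
proof -
  have C: "C > 0" using b c by (meson order_less_le_trans)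
  define M where "M i = avgY p (\<lambda>i j. 1 / psi i j) i" for i
  have stepj: "\<bar>1 / psi (i+1) j - 1 / psi i j\<bar> \<le> eps N * C' / c^2" for j
  proof -
    have "\<bar>1 / psi (i+1) j - 1 / psi i j\<bar> \<le> \<bar>psi (i+1) j - psi i j\<bar> / c^2"
      using b c by (intro inv_diff_bound) auto
    also have "\<dots> \<le> eps N * C' / c^2" using psi_step[OF N p per lin, of i j]
      by (intro divide_right_mono) auto
    finally show ?thesis .
  qed
  have "M (i+1) - M i = (1 / real p) * (\<Sum>j\<in>{1..int p}. 1 / psi (i+1) j - 1 / psi i j)"
    unfolding M_def avgY_def by (simp add: sum_subtractf right_diff_distrib)
  then have "\<bar>M (i+1) - M i\<bar> = (1 / real p) * \<bar>\<Sum>j\<in>{1..int p}. 1 / psi (i+1) j - 1 / psi i j\<bar>"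
    by (simp add: abs_mult)
  also have "\<dots> \<le> (1 / real p) * (\<Sum>j\<in>{1..int p}. \<bar>1 / psi (i+1) j - 1 / psi i j\<bar>)"
    by (intro mult_left_mono sum_abs) auto
  also have "\<dots> \<le> (1 / real p) * (\<Sum>j\<in>{1..int p}. eps N * C' / c^2)"
    by (intro mult_left_mono sum_mono stepj) auto
  also have "\<dots> = eps N * C' / c^2" using p by simp
  finally have Mstep: "\<bar>M (i+1) - M i\<bar> \<le> eps N * C' / c^2" .
  have Mlo: "M x \<ge> 1 / C" for x unfolding M_def using M_bounds[OF p c b] by auto
  have "\<bar>psi0 p psi (i+1) - psi0 p psi i\<bar> = \<bar>1 / M (i+1) - 1 / M i\<bar>"
    unfolding psi0_def M_def by (simp add: inverse_eq_divide)
  also have "\<dots> \<le> \<bar>M (i+1) - M i\<bar> / (1/C)^2"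
    using Mlo C by (intro inv_diff_bound) auto
  also have "\<dots> = C^2 * \<bar>M (i+1) - M i\<bar>" by (simp add: power2_eq_square)
  also have "\<dots> \<le> C^2 * (eps N * C' / c^2)" by (intro mult_left_mono Mstep) auto
  finally show ?thesis by (simp add: algebra_simps)
qed

lemma lip_from_step:
  fixes a :: "int \<Rightarrow> real"
  assumes st: "\<And>i. \<bar>a (i+1) - a i\<bar> \<le> D"
  shows "\<bar>a x - a y\<bar> \<le> D * \<bar>x - y\<bar>"
proof -
  have far: "\<bar>a (y + int n) - a y\<bar> \<le> D * real n" for y n
  proof (induction n)
    case 0 then show ?case by simp
  next
    case (Suc n)
    have "a (y + int (Suc n)) = a (y + int n + 1)" by (simp add: algebra_simps)
    then have "\<bar>a (y + int (Suc n)) - a y\<bar> \<le> \<bar>a (y + int n + 1) - a (y + int n)\<bar> + \<bar>a (y + int n) - a y\<bar>"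
      by linarith
    also have "\<dots> \<le> D + D * real n" using st Suc by (intro add_mono) auto
    finally show ?case by (simp add: algebra_simps)
  qed
  show ?thesis
  proof (cases "x \<ge> y")
    case True
    then have "x = y + int (nat (x - y))" by simp
    then show ?thesis using far[of y "nat (x - y)"] True by (metis abs_of_nonneg diff_ge_0_iff_ge of_nat_nat)
  next
    case False
    then have "y = x + int (nat (y - x))" by simp
    then show ?thesis using far[of x "nat (y - x)"] False
      by (metis abs_minus_commute abs_of_nonneg diff_ge_0_iff_ge nle_le of_nat_nat)
  qed
qed




lemma II_win: "{1..<1 + int N} = II N" by auto

lemma realize_sharp:
  assumes N: "N > 0" and g0: "(\<Sum>i\<in>II N. g i) = 0"
  shows "\<exists>v\<in>Usharp N. \<forall>i\<in>II N. Dd N v i = g i"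
proof -
  obtain v0 where v0: "\<forall>i. v0 (i + int N) = v0 i" "\<forall>i\<in>{1..<1+int N}. v0 (i+1) - v0 i = eps N * g i"
    using antideriv[where q=N and r=1 and g=g and e="eps N"] N g0 II_win by auto
  define v where "v i = v0 i - avgX N v0" for i
  have "v \<in> Usharp N"
    unfolding Usharp_def Uper_def
  proof (intro CollectI conjI allI)
    show "v (i + int N) = v i" for i unfolding v_def using v0 by simp
    show "avgX N v = 0" unfolding avgX_def v_def using N by (simp add: sum_subtractf avgX_def)
  qed
  moreover have "\<forall>i\<in>II N. Dd N v i = g i"
    using v0(2) eps_pos[OF N] unfolding II_win Dd_def v_def by simp
  ultimately show ?thesis by blast
qed

lemma realize_p:
  assumes p: "p > 0" and N: "N > 0" and g0: "(\<Sum>i\<in>{r..<r+int p}. g i) = 0"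
  shows "\<exists>s\<in>Upsharp p. \<forall>i\<in>{r..<r+int p}. Dd N s i = g i"
proof -
  obtain v0 where v0: "\<forall>i. v0 (i + int p) = v0 i" "\<forall>i\<in>{r..<r+int p}. v0 (i+1) - v0 i = eps N * g i"
    using antideriv[where q=p and r=r and g=g and e="eps N"] p g0 by auto
  define m where "m = (1 / real p) * (\<Sum>i\<in>{1..int p}. v0 i)"
  define v where "v i = v0 i - m" for i
  have "v \<in> Upsharp p"
    unfolding Upsharp_def
  proof (intro CollectI conjI allI)
    show "v (i + int p) = v i" for i unfolding v_def using v0 by simp
    show "(\<Sum>i\<in>{1..int p}. v i) = 0" unfolding m_def v_def using p by (simp add: sum_subtractf)
  qed
  moreover have "\<forall>i\<in>{r..<r+int p}. Dd N v i = g i"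
    using v0(2) eps_pos[OF N] unfolding Dd_def v_def by simp
  ultimately show ?thesis by blast
qed

lemma sum_const_ivl: "a \<le> b \<Longrightarrow> (\<Sum>i\<in>{a..<b::int}. (t::real)) = real_of_int (b - a) * t"
  by simp

lemma realize_H:
  assumes N: "N > 0" and m: "valid_mesh N K idx" and g0: "(\<Sum>i\<in>II N. pc K idx c i) = 0"
  shows "\<exists>v\<in>UHsharp N K idx. \<forall>i\<in>II N. Dd N v i = pc K idx c i"
proof -
  let ?g = "pc K idx c"
  obtain v0 where v0: "\<forall>i. v0 (i + int N) = v0 i"
      "\<forall>i\<in>{1..1+int N}. v0 i = eps N * (\<Sum>l\<in>{1..<i}. ?g l)"
      "\<forall>i\<in>{1..<1+int N}. v0 (i+1) - v0 i = eps N * ?g i"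
    using antideriv[where q=N and r=1 and g="?g" and e="eps N"] N g0 II_win by auto
  define v where "v i = v0 i - avgX N v0" for i
  have vsh: "v \<in> Usharp N"
    unfolding Usharp_def Uper_def
  proof (intro CollectI conjI allI)
    show "v (i + int N) = v i" for i unfolding v_def using v0 by simp
    show "avgX N v = 0" unfolding avgX_def v_def using N by (simp add: sum_subtractf avgX_def)
  qed
  have aff: "is_affine_on N v {idx k..idx (Suc k)}" if k: "k \<in> {1..K}" for k
  proof -
    have r1: "1 \<le> idx k" "idx (Suc k) \<le> int N + 1" using mesh_range[OF m, of k] mesh_range[OF m, of "Suc k"] k by auto
    define A where "A = eps N * (\<Sum>l\<in>{1..<idx k}. ?g l) - avgX N v0 - c k * eps N * real_of_int (idx k)"
    show ?thesis unfolding is_affine_on_def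
    proof (intro exI ballI)
      fix i assume i: "i \<in> {idx k..idx (Suc k)}"
      have "{1..<i} = {1..<idx k} \<union> {idx k..<i}" using i r1 by auto
      then have "(\<Sum>l\<in>{1..<i}. ?g l) = (\<Sum>l\<in>{1..<idx k}. ?g l) + (\<Sum>l\<in>{idx k..<i}. ?g l)"
        by (simp, subst sum.union_disjoint) auto
      also have "(\<Sum>l\<in>{idx k..<i}. ?g l) = (\<Sum>l\<in>{idx k..<i}. c k)"
        by (intro sum.cong refl pc_eq[OF m k]) (use i in auto)
      also have "\<dots> = real_of_int (i - idx k) * c k" using i by simp
      finally have "(\<Sum>l\<in>{1..<i}. ?g l) = (\<Sum>l\<in>{1..<idx k}. ?g l) + real_of_int (i - idx k) * c k" .
      moreover have "i \<in> {1..1+int N}" using i r1 by auto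
      ultimately have "v i = eps N * ((\<Sum>l\<in>{1..<idx k}. ?g l) + real_of_int (i - idx k) * c k) - avgX N v0"
        unfolding v_def using v0(2) by simp
      then show "v i = A + c k * Xpt N i" unfolding A_def Xpt_def by (simp add: algebra_simps)
    qed
  qed
  have "v \<in> UHsharp N K idx" unfolding UHsharp_def UHper_def using vsh aff by (auto simp: Usharp_def)
  moreover have "\<forall>i\<in>II N. Dd N v i = ?g i"
    using v0(3) eps_pos[OF N] unfolding II_win Dd_def v_def by simp
  ultimately show ?thesis by blast
qed

lemma telescope_per:
  assumes "\<forall>i. v (i + int q) = v i"
  shows "(\<Sum>i\<in>{r..<r+int q}. v (i+1) - v i) = (0::real)"
  using win_telescope[where v=v and r=r and q=q] assms by simp

lemma Dd_sum_per:
  assumes "\<forall>i. v (i + int q) = v i"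
  shows "(\<Sum>i\<in>{r..<r+int q}. Dd N v i) = 0"
  using telescope_per[OF assms, of r] unfolding Dd_def by (simp add: sum_divide_distrib[symmetric])




lemma flux:
  fixes F a :: "int \<Rightarrow> real"
  assumes N: "N > 0" and apos: "\<forall>i. a i > 0" and F0: "(\<Sum>i\<in>II N. F i) = 0"
  shows "\<exists>\<sigma>. (\<forall>v\<in>Uper N. ipX N \<sigma> (Dd N v) = ipX N F v) \<and> (\<Sum>i\<in>II N. \<sigma> i / a i) = 0
            \<and> (\<forall>i j. 0 \<le> i \<longrightarrow> i \<le> j \<longrightarrow> \<sigma> j - \<sigma> i = - eps N * (\<Sum>l\<in>{i<..j}. F l))"
proof -
  define s0 where "s0 i = - eps N * (\<Sum>l\<in>{1..i}. F l)" for i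
  have Sa: "(\<Sum>i\<in>II N. 1 / a i) > 0" using N apos by (intro sum_pos) auto
  define C0 where "C0 = - (\<Sum>i\<in>II N. s0 i / a i) / (\<Sum>i\<in>II N. 1 / a i)"
  define \<sigma> where "\<sigma> i = s0 i + C0" for i
  have inc: "\<sigma> j - \<sigma> i = - eps N * (\<Sum>l\<in>{i<..j}. F l)" if "0 \<le> i" "i \<le> j" for i j
  proof -
    have "{1..j} = {1..i} \<union> {i<..j}" using that by auto
    then have "(\<Sum>l\<in>{1..j}. F l) = (\<Sum>l\<in>{1..i}. F l) + (\<Sum>l\<in>{i<..j}. F l)"
      by (simp, subst sum.union_disjoint) auto
    then show ?thesis unfolding \<sigma>_def s0_def by (simp add: algebra_simps)
  qed
  have zero: "(\<Sum>i\<in>II N. \<sigma> i / a i) = 0"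
  proof -
    have "(\<Sum>i\<in>II N. \<sigma> i / a i) = (\<Sum>i\<in>II N. s0 i / a i) + C0 * (\<Sum>i\<in>II N. 1 / a i)"
      unfolding \<sigma>_def by (simp add: add_divide_distrib sum.distrib sum_distrib_left)
    then show ?thesis unfolding C0_def using Sa by simp
  qed
  have ip: "ipX N \<sigma> (Dd N v) = ipX N F v" if v: "v \<in> Uper N" for v
  proof -
    have vp: "v (1 + int N) = v 1" using v unfolding Uper_def by blast
    define T where "T i = \<sigma> (i - 1) * v i" for i
    have e0: "{0<..int N} = II N" by auto
    have sN: "\<sigma> (int N) = \<sigma> 0" using inc[of 0 "int N"] F0 unfolding e0 by simp
    have "(\<Sum>i\<in>II N. T (i+1) - T i) = T (1 + int N) - T 1"
      using win_telescope[where v=T and r=1 and q=N] unfolding II_win .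
    also have "T (1 + int N) = T 1" unfolding T_def using sN vp by simp
    finally have tel: "(\<Sum>i\<in>II N. T (i+1) - T i) = 0" by simp
    have step: "T (i+1) - T i = \<sigma> i * (v (i+1) - v i) - eps N * F i * v i" if "i \<in> II N" for i
    proof -
      have "{i - 1<..i} = {i}" by auto
      then have "\<sigma> i - \<sigma> (i - 1) = - eps N * F i"
        using inc[of "i - 1" i] that by simp
      then have h: "\<sigma> (i - 1) = \<sigma> i + eps N * F i" by simp
      show ?thesis unfolding T_def h by (simp add: algebra_simps)
    qed
    have "(\<Sum>i\<in>II N. \<sigma> i * (v (i+1) - v i)) = eps N * (\<Sum>i\<in>II N. F i * v i)"
    proof -
      have "0 = (\<Sum>i\<in>II N. \<sigma> i * (v (i+1) - v i) - eps N * F i * v i)"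
        using tel step by simp
      then show ?thesis by (simp add: sum_subtractf sum_distrib_left mult.assoc)
    qed
    moreover have "ipX N \<sigma> (Dd N v) = (1 / real N) / eps N * (\<Sum>i\<in>II N. \<sigma> i * (v (i+1) - v i))"
      unfolding ipX_def Dd_def by (simp add: sum_divide_distrib[symmetric])
    moreover have "(1 / real N) / eps N = 1" using N by (simp add: eps_def)
    moreover have "ipX N F v = eps N * (\<Sum>i\<in>II N. F i * v i)" unfolding ipX_def eps_def by simp
    ultimately show ?thesis by (simp add: eps_def)
  qed
  show ?thesis using ip zero inc by blast
qed




lemma flux_local:
  fixes \<sigma> F :: "int \<Rightarrow> real"
  assumes inc: "\<forall>i j. 0 \<le> i \<longrightarrow> i \<le> j \<longrightarrow> \<sigma> j - \<sigma> i = - eps N * (\<Sum>l\<in>{i<..j}. F l)"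
    and N: "N > 0" and ij: "0 \<le> i" "i \<le> j" and sub: "{i<..j} \<subseteq> A" and fin: "finite A"
  shows "\<bar>\<sigma> j - \<sigma> i\<bar> \<le> eps N * (\<Sum>l\<in>A. \<bar>F l\<bar>)"
proof -
  have "\<bar>\<sigma> j - \<sigma> i\<bar> = eps N * \<bar>\<Sum>l\<in>{i<..j}. F l\<bar>"
    using inc ij eps_pos[OF N] by (simp add: abs_mult)
  also have "\<dots> \<le> eps N * (\<Sum>l\<in>{i<..j}. \<bar>F l\<bar>)"
    using eps_pos[OF N] by (intro mult_left_mono sum_abs) auto
  also have "\<dots> \<le> eps N * (\<Sum>l\<in>A. \<bar>F l\<bar>)"
    using eps_pos[OF N] sub fin by (intro mult_left_mono sum_mono2) auto
  finally show ?thesis .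
qed

lemma flux_local2:
  fixes \<sigma> F :: "int \<Rightarrow> real"
  assumes inc: "\<forall>i j. 0 \<le> i \<longrightarrow> i \<le> j \<longrightarrow> \<sigma> j - \<sigma> i = - eps N * (\<Sum>l\<in>{i<..j}. F l)"
    and N: "N > 0" and ij: "0 \<le> i" "0 \<le> j" and sub: "{min i j<..max i j} \<subseteq> A" and fin: "finite A"
  shows "\<bar>\<sigma> j - \<sigma> i\<bar> \<le> eps N * (\<Sum>l\<in>A. \<bar>F l\<bar>)"
proof (cases "i \<le> j")
  case True then show ?thesis using flux_local[OF inc N ij(1) True _ fin] sub by auto
next
  case False
  then have "\<bar>\<sigma> i - \<sigma> j\<bar> \<le> eps N * (\<Sum>l\<in>A. \<bar>F l\<bar>)"
    using flux_local[OF inc N ij(2) _ _ fin, of i] sub by auto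
  then show ?thesis by (simp add: abs_minus_commute)
qed

lemma flux_sup:
  fixes \<sigma> F a :: "int \<Rightarrow> real"
  assumes inc: "\<forall>i j. 0 \<le> i \<longrightarrow> i \<le> j \<longrightarrow> \<sigma> j - \<sigma> i = - eps N * (\<Sum>l\<in>{i<..j}. F l)"
    and N: "N > 0" and apos: "\<forall>i. a i > 0" and z: "(\<Sum>i\<in>II N. \<sigma> i / a i) = 0"
    and i: "i \<in> II N"
  shows "\<bar>\<sigma> i\<bar> \<le> L2 N F"
proof -
  define B where "B = eps N * (\<Sum>l\<in>II N. \<bar>F l\<bar>)"
  have BL: "B \<le> L2 N F" unfolding B_def eps_def using avg_abs_le_L2[of N F] by simp
  have d: "\<bar>\<sigma> y - \<sigma> x\<bar> \<le> B" if "x \<in> II N" "y \<in> II N" for x y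
    unfolding B_def using that by (intro flux_local2[OF inc N]) auto
  obtain i1 where i1: "i1 \<in> II N" "\<sigma> i1 \<ge> 0"
  proof (rule ccontr)
    assume "\<not> thesis"
    then have "\<forall>x\<in>II N. \<sigma> x < 0" using that by force
    then have "(\<Sum>x\<in>II N. - (\<sigma> x / a x)) > 0" using N apos
      by (intro sum_pos) (auto simp: divide_neg_pos)
    then show False using z by (simp add: sum_negf)
  qed
  obtain i2 where i2: "i2 \<in> II N" "\<sigma> i2 \<le> 0"
  proof (rule ccontr)
    assume "\<not> thesis"
    then have "\<forall>x\<in>II N. \<sigma> x > 0" using that by force
    then have "(\<Sum>x\<in>II N. \<sigma> x / a x) > 0" using N apos
      by (intro sum_pos) auto
    then show False using z by simp
  qed
  have "\<sigma> i \<le> B" using d[OF i2(1) i] i2(2) by linarith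
  moreover have "- \<sigma> i \<le> B" using d[OF i i1(1)] i1(2) by linarith
  ultimately show ?thesis using BL by linarith
qed




lemma sq_sum_le: "(x + y)^2 \<le> 2 * x^2 + 2 * (y::real)^2"
proof -
  have "0 \<le> (x - y) * (x - y)" by simp
  then show ?thesis unfolding power2_eq_square by (simp add: algebra_simps)
qed

lemma approx_pw:
  fixes \<sigma> F a :: "int \<Rightarrow> real"
  assumes N: "N > 0" and m: "valid_mesh N K idx"
    and inc: "\<forall>i j. 0 \<le> i \<longrightarrow> i \<le> j \<longrightarrow> \<sigma> j - \<sigma> i = - eps N * (\<Sum>l\<in>{i<..j}. F l)"
    and c: "c > 0" and alo: "\<forall>i. c \<le> a i"
    and lip: "\<forall>x y. \<bar>a x - a y\<bar> \<le> eps N * L * \<bar>x - y\<bar>" and L: "L \<ge> 0"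
    and z: "(\<Sum>i\<in>II N. \<sigma> i / a i) = 0"
    and k: "k \<in> {1..K}" and i: "i \<in> SS idx k"
  shows "\<bar>\<sigma> i / a i - \<sigma> (idx k) / a (idx k)\<bar>
     \<le> eps N * (\<Sum>l\<in>SS idx k. \<bar>F l\<bar>) / c + L2 N F * L * Hmax N K idx / c^2"
proof -
  have apos: "\<forall>i. a i > 0" using alo c by (meson order_less_le_trans)
  let ?m = "idx k"
  have sub: "SS idx k \<subseteq> II N" by (rule elem_sub[OF m k])
  have mS: "?m \<in> SS idx k" using mesh_step[OF m k] by simp
  have m1: "?m \<ge> 1" using mesh_range[OF m, of k] k by auto
  have im: "?m \<le> i" using i by simp
  have id: "\<sigma> i / a i - \<sigma> ?m / a ?m = (\<sigma> i - \<sigma> ?m) / a i + \<sigma> ?m * (1 / a i - 1 / a ?m)"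
  proof -
    have "a i \<noteq> 0" "a ?m \<noteq> 0" using apos by (metis less_irrefl)+
    then show ?thesis by (simp add: field_simps)
  qed
  have t1: "\<bar>(\<sigma> i - \<sigma> ?m) / a i\<bar> \<le> eps N * (\<Sum>l\<in>SS idx k. \<bar>F l\<bar>) / c"
  proof -
    have "\<bar>\<sigma> i - \<sigma> ?m\<bar> \<le> eps N * (\<Sum>l\<in>SS idx k. \<bar>F l\<bar>)"
      using i m1 by (intro flux_local[OF inc N]) auto
    moreover have "\<bar>(\<sigma> i - \<sigma> ?m) / a i\<bar> = \<bar>\<sigma> i - \<sigma> ?m\<bar> / a i" using apos[rule_format, of i] by (simp add: abs_div)
    moreover have "\<bar>\<sigma> i - \<sigma> ?m\<bar> / a i \<le> \<bar>\<sigma> i - \<sigma> ?m\<bar> / c"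
      using alo c apos by (intro divide_left_mono) (auto intro: mult_pos_pos)
    ultimately show ?thesis using c by (smt (verit) divide_right_mono)
  qed
  have t2: "\<bar>\<sigma> ?m * (1 / a i - 1 / a ?m)\<bar> \<le> L2 N F * L * Hmax N K idx / c^2"
  proof -
    have s: "\<bar>\<sigma> ?m\<bar> \<le> L2 N F" using flux_sup[OF inc N apos z] mS sub by auto
    have "\<bar>1 / a i - 1 / a ?m\<bar> \<le> \<bar>a i - a ?m\<bar> / c^2" using alo c by (intro inv_diff_bound) auto
    also have "\<dots> \<le> eps N * L * \<bar>i - ?m\<bar> / c^2" using lip by (intro divide_right_mono) auto
    also have "eps N * L * \<bar>i - ?m\<bar> \<le> L * Hmax N K idx"
    proof -
      have "\<bar>i - ?m\<bar> \<le> idx (Suc k) - idx k" using i by simp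
      then have "eps N * real_of_int \<bar>i - ?m\<bar> \<le> Hk N idx k"
        unfolding Hk_def using eps_pos[OF N] by (intro mult_left_mono) auto
      also have "\<dots> \<le> Hmax N K idx" using Hk_le_Hmax[OF k] .
      finally show ?thesis using L by (metis mult.assoc mult.commute mult_left_mono)
    qed
    then have "eps N * L * \<bar>i - ?m\<bar> / c^2 \<le> L * Hmax N K idx / c^2" by (intro divide_right_mono) auto
    finally have "\<bar>1 / a i - 1 / a ?m\<bar> \<le> L * Hmax N K idx / c^2" .
    then have "\<bar>\<sigma> ?m\<bar> * \<bar>1 / a i - 1 / a ?m\<bar> \<le> L2 N F * (L * Hmax N K idx / c^2)"
      using s by (intro mult_mono) (auto simp: L2_nonneg)
    then show ?thesis by (simp add: abs_mult)
  qed
  have "\<bar>(\<sigma> i - \<sigma> ?m) / a i + \<sigma> ?m * (1 / a i - 1 / a ?m)\<bar>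
     \<le> \<bar>(\<sigma> i - \<sigma> ?m) / a i\<bar> + \<bar>\<sigma> ?m * (1 / a i - 1 / a ?m)\<bar>" by (rule abs_triangle_ineq)
  then show ?thesis unfolding id using t1 t2 by linarith
qed




lemma approx:
  fixes \<sigma> F a :: "int \<Rightarrow> real"
  assumes N: "N > 0" and m: "valid_mesh N K idx"
    and inc: "\<forall>i j. 0 \<le> i \<longrightarrow> i \<le> j \<longrightarrow> \<sigma> j - \<sigma> i = - eps N * (\<Sum>l\<in>{i<..j}. F l)"
    and c: "c > 0" and alo: "\<forall>i. c \<le> a i"
    and lip: "\<forall>x y. \<bar>a x - a y\<bar> \<le> eps N * L * \<bar>x - y\<bar>" and L: "L \<ge> 0"
    and z: "(\<Sum>i\<in>II N. \<sigma> i / a i) = 0"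
  shows "\<exists>cc. (\<Sum>i\<in>II N. pc K idx cc i) = 0 \<and>
     L2 N (\<lambda>i. \<sigma> i / a i - pc K idx cc i) \<le> 2 * sqrt (2 / c^2 + 2 * L^2 / c^4) * Hmax N K idx * L2 N F"
proof -
  define H where "H = Hmax N K idx"
  define nF where "nF = L2 N F"
  define K1 where "K1 = 2 / c^2 + 2 * L^2 / c^4"
  define c0 where "c0 k = \<sigma> (idx k) / a (idx k)" for k
  define A where "A k = eps N * (\<Sum>l\<in>SS idx k. \<bar>F l\<bar>) / c" for k
  define B where "B = nF * L * H / c^2"
  define d where "d i = \<sigma> i / a i - pc K idx c0 i" for i
  have H0: "H \<ge> 0" unfolding H_def by (rule Hmax_nonneg[OF m])
  have nF0: "nF \<ge> 0" unfolding nF_def by (rule L2_nonneg)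
  have B0: "B \<ge> 0" unfolding B_def using nF0 L H0 c by simp
  have A0: "A k \<ge> 0" for k unfolding A_def using eps_pos[OF N] c by (auto intro!: sum_nonneg)
  have pw: "\<bar>d i\<bar> \<le> A k + B" if k: "k \<in> {1..K}" and i: "i \<in> SS idx k" for k i
    unfolding d_def pc_eq[OF m k i] c0_def A_def B_def H_def nF_def
    by (rule approx_pw[OF N m inc c alo lip L z k i])
  have pw2: "d i * d i \<le> 2 * (A k)^2 + 2 * B^2" if k: "k \<in> {1..K}" and i: "i \<in> SS idx k" for k i
  proof -
    have "\<bar>d i\<bar>^2 \<le> (A k + B)^2" using pw[OF k i] by (intro power_mono) auto
    then show ?thesis using sq_sum_le[of "A k" B] by (simp add: power2_eq_square)
  qed
  have cs: "Hk N idx k * (A k)^2 \<le> H^2 * (eps N * (\<Sum>l\<in>SS idx k. F l * F l)) / c^2" if k: "k \<in> {1..K}" for k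
  proof -
    define s1 where "s1 = (\<Sum>l\<in>SS idx k. \<bar>F l\<bar>)"
    define S2 where "S2 = (\<Sum>l\<in>SS idx k. F l * F l)"
    define cd where "cd = real (card (SS idx k))"
    have S20: "S2 \<ge> 0" unfolding S2_def by (auto intro!: sum_nonneg)
    have Hkc: "Hk N idx k = eps N * cd" unfolding cd_def using Hk_card[OF m k] by simp
    have Hk0: "Hk N idx k \<ge> 0" by (rule Hk_nonneg[OF m k])
    have HkH: "Hk N idx k \<le> H" unfolding H_def by (rule Hk_le_Hmax[OF k])
    have q: "s1^2 \<le> S2 * cd"
      using sum_squared_le_sum_of_squares[of "\<lambda>l. \<bar>F l\<bar>" "SS idx k"]
      unfolding s1_def S2_def cd_def by (simp add: power2_eq_square)
    have e0: "eps N \<ge> 0" using eps_pos[OF N] by simp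
    have "Hk N idx k * (A k)^2 = Hk N idx k * (eps N)^2 * s1^2 / c^2"
      unfolding A_def s1_def by (simp add: power_divide power_mult_distrib)
    also have "\<dots> \<le> Hk N idx k * (eps N)^2 * (S2 * cd) / c^2"
      using q Hk0 by (intro divide_right_mono mult_left_mono) auto
    also have "\<dots> = (Hk N idx k * Hk N idx k) * (eps N * S2) / c^2"
      unfolding Hkc by (simp add: power2_eq_square algebra_simps)
    also have "\<dots> \<le> (H * H) * (eps N * S2) / c^2"
      using Hk0 HkH S20 e0 by (intro divide_right_mono mult_right_mono mult_mono) auto
    finally show ?thesis unfolding S2_def by (simp add: power2_eq_square)
  qed
  have "ipX N d d \<le> K1 * H^2 * nF^2"
  proof -
    have "ipX N d d = (1 / real N) * (\<Sum>k\<in>{1..K}. \<Sum>i\<in>SS idx k. d i * d i)"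
      unfolding ipX_def sum_split[OF m] ..
    also have "\<dots> \<le> (1 / real N) * (\<Sum>k\<in>{1..K}. \<Sum>i\<in>SS idx k. 2 * (A k)^2 + 2 * B^2)"
      by (intro mult_left_mono sum_mono pw2) auto
    also have "\<dots> = (\<Sum>k\<in>{1..K}. (1 / real N) * (\<Sum>i\<in>SS idx k. 2 * (A k)^2 + 2 * B^2))"
      by (rule sum_distrib_left)
    also have "\<dots> = (\<Sum>k\<in>{1..K}. Hk N idx k * (2 * (A k)^2 + 2 * B^2))"
    proof (intro sum.cong refl)
      fix k assume k: "k \<in> {1..K}"
      show "1 / real N * (\<Sum>i\<in>SS idx k. 2 * (A k)\<^sup>2 + 2 * B\<^sup>2) = Hk N idx k * (2 * (A k)\<^sup>2 + 2 * B\<^sup>2)"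
        using Hk_card[OF m k] by (simp add: eps_def)
    qed
    also have "\<dots> = 2 * (\<Sum>k\<in>{1..K}. Hk N idx k * (A k)^2) + 2 * B^2 * (\<Sum>k\<in>{1..K}. Hk N idx k)"
      by (simp add: algebra_simps sum.distrib sum_distrib_left)
    also have "(\<Sum>k\<in>{1..K}. Hk N idx k) = 1" by (rule sum_Hk[OF m N])
    also have "(\<Sum>k\<in>{1..K}. Hk N idx k * (A k)^2) \<le> (\<Sum>k\<in>{1..K}. H^2 * (eps N * (\<Sum>l\<in>SS idx k. F l * F l)) / c^2)"
      by (intro sum_mono cs) auto
    also have "\<dots> = H^2 / c^2 * (eps N * (\<Sum>k\<in>{1..K}. \<Sum>l\<in>SS idx k. F l * F l))"
      by (simp add: sum_distrib_left sum_divide_distrib)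
    also have "(\<Sum>k\<in>{1..K}. \<Sum>l\<in>SS idx k. F l * F l) = (\<Sum>l\<in>II N. F l * F l)"
      by (rule sum_split[OF m, symmetric])
    also have "eps N * (\<Sum>l\<in>II N. F l * F l) = nF^2"
      unfolding nF_def L2_sq ipX_def eps_def ..
    finally have "ipX N d d \<le> 2 * (H\<^sup>2 / c\<^sup>2 * nF\<^sup>2) + 2 * B\<^sup>2 * 1" by simp
    also have "\<dots> = K1 * H^2 * nF^2"
      unfolding K1_def B_def using c by (simp add: field_simps power_mult_distrib)
    finally show ?thesis .
  qed
  then have Ld: "L2 N d \<le> sqrt K1 * H * nF"
    using H0 nF0 by (intro L2_le_from_sq) (auto simp: power_mult_distrib K1_def)
  define t where "t = (1 / real N) * (\<Sum>i\<in>II N. pc K idx c0 i)"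
  define cc where "cc k = c0 k - t" for k
  have pcc: "pc K idx cc i = pc K idx c0 i - t" if "i \<in> II N" for i
    unfolding cc_def pc_diff pc_const[OF m that] ..
  have s0: "(\<Sum>i\<in>II N. pc K idx cc i) = 0"
    using N by (simp add: pcc t_def sum_subtractf)
  have "t = - ((1 / real N) * (\<Sum>i\<in>II N. d i))"
    unfolding t_def d_def using z by (simp add: sum_subtractf)
  then have "\<bar>t\<bar> \<le> (1 / real N) * (\<Sum>i\<in>II N. \<bar>d i\<bar>)"
    by (simp add: abs_mult sum_abs divide_right_mono)
  also have "\<dots> \<le> L2 N d" by (rule avg_abs_le_L2)
  finally have tb: "\<bar>t\<bar> \<le> L2 N d" .
  have "L2 N (\<lambda>i. \<sigma> i / a i - pc K idx cc i) = L2 N (\<lambda>i. d i + t)"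
    by (intro L2_cong) (simp add: pcc d_def)
  also have "\<dots> \<le> L2 N d + L2 N (\<lambda>_. t)" by (rule L2_triangle)
  also have "\<dots> \<le> 2 * L2 N d" using tb L2_const[OF N, of t] by simp
  also have "\<dots> \<le> 2 * (sqrt K1 * H * nF)" using Ld by simp
  finally show ?thesis using s0 unfolding K1_def H_def nF_def by (intro exI[of _ cc]) (simp add: mult.assoc)
qed




lemma ipX_lower:
  assumes "\<forall>i\<in>II N. c \<le> al i"
  shows "c * ipX N u u \<le> ipX N (\<lambda>i. al i * u i) u"
proof -
  have "(\<Sum>i\<in>II N. c * (u i * u i)) \<le> (\<Sum>i\<in>II N. al i * u i * u i)"
    using assms by (intro sum_mono) (auto simp: mult.assoc intro: mult_right_mono)
  then show ?thesis unfolding ipX_def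
    by (simp add: sum_distrib_left[symmetric] mult.left_commute divide_right_mono)
qed

lemma energy:
  fixes al a \<sigma> :: "int \<Rightarrow> real"
  assumes N: "N > 0" and m: "valid_mesh N K idx"
    and c: "c > 0" and alo: "\<forall>i\<in>II N. c \<le> al i" and ahi: "\<forall>i\<in>II N. al i \<le> C"
    and del: "\<forall>i\<in>II N. \<bar>al i - a i\<bar> \<le> \<delta>" and d0: "\<delta> \<ge> 0"
    and apos: "\<forall>i. a i > 0"
    and gal: "\<forall>cc. (\<Sum>i\<in>II N. pc K idx cc i) = 0 \<longrightarrow>
                ipX N (\<lambda>i. al i * pc K idx cb i - \<sigma> i) (pc K idx cc) = 0"
    and sb: "(\<Sum>i\<in>II N. pc K idx cb i) = 0"
    and s0: "(\<Sum>i\<in>II N. pc K idx c0 i) = 0"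
    and ap: "L2 N (\<lambda>i. \<sigma> i / a i - pc K idx c0 i) \<le> e0"
    and gb: "L2 N (\<lambda>i. \<sigma> i / a i) \<le> G"
  shows "L2 N (\<lambda>i. pc K idx cb i - \<sigma> i / a i) \<le> (\<delta> * G + C * e0) / c + e0"
proof -
  define g where "g i = \<sigma> i / a i" for i
  define dd where "dd = pc K idx (\<lambda>k. cb k - c0 k)"
  have dd: "dd i = pc K idx cb i - pc K idx c0 i" for i unfolding dd_def pc_diff ..
  have sdd: "(\<Sum>i\<in>II N. pc K idx (\<lambda>k. cb k - c0 k) i) = 0"
    using sb s0 by (simp add: pc_diff sum_subtractf)
  have orth: "ipX N (\<lambda>i. al i * pc K idx cb i - \<sigma> i) dd = 0" unfolding dd_def using gal sdd by blast
  have G0: "G \<ge> 0" using gb L2_nonneg order_trans by blast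
  have e00: "e0 \<ge> 0" using ap L2_nonneg order_trans by blast
  have "(1::int) \<in> II N" using N by simp
  then have C0: "C \<ge> c" using alo ahi by force
  have "c * (L2 N dd)^2 \<le> ipX N (\<lambda>i. al i * dd i) dd" unfolding L2_sq by (rule ipX_lower[OF alo])
  also have "ipX N (\<lambda>i. al i * dd i) dd = ipX N (\<lambda>i. (a i - al i) * g i + al i * (g i - pc K idx c0 i)) dd"
  proof -
    have "ipX N (\<lambda>i. al i * dd i) dd = ipX N (\<lambda>i. al i * dd i) dd - ipX N (\<lambda>i. al i * pc K idx cb i - \<sigma> i) dd"
      using orth by simp
    also have "\<dots> = ipX N (\<lambda>i. al i * dd i - (al i * pc K idx cb i - \<sigma> i)) dd" by (simp add: ipX_diff_left)
    also have "\<dots> = ipX N (\<lambda>i. (a i - al i) * g i + al i * (g i - pc K idx c0 i)) dd"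
    proof (intro ipX_cong refl)
      fix i
      have "a i \<noteq> 0" using apos by (metis less_irrefl)
      then show "al i * dd i - (al i * pc K idx cb i - \<sigma> i) = (a i - al i) * g i + al i * (g i - pc K idx c0 i)"
        unfolding dd g_def by (simp add: field_simps)
    qed
    finally show ?thesis .
  qed
  also have "\<dots> \<le> L2 N (\<lambda>i. (a i - al i) * g i + al i * (g i - pc K idx c0 i)) * L2 N dd" by (rule ipX_CS')
  also have "L2 N (\<lambda>i. (a i - al i) * g i + al i * (g i - pc K idx c0 i)) \<le> \<delta> * G + C * e0"
  proof -
    have "L2 N (\<lambda>i. (a i - al i) * g i) \<le> \<delta> * L2 N g"
      using del d0 by (intro L2_mono_pw) (auto simp: abs_mult abs_minus_commute intro: mult_right_mono)
    also have "\<dots> \<le> \<delta> * G" using gb d0 unfolding g_def by (intro mult_left_mono) auto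
    finally have 1: "L2 N (\<lambda>i. (a i - al i) * g i) \<le> \<delta> * G" .
    have "L2 N (\<lambda>i. al i * (g i - pc K idx c0 i)) \<le> C * L2 N (\<lambda>i. g i - pc K idx c0 i)"
    proof (intro L2_mono_pw)
      fix i assume i: "i \<in> II N"
      have "\<bar>al i\<bar> \<le> C" using alo ahi c i by force
      then show "\<bar>al i * (g i - pc K idx c0 i)\<bar> \<le> C * \<bar>g i - pc K idx c0 i\<bar>"
        by (simp add: abs_mult mult_right_mono)
    qed (use C0 c in auto)
    also have "\<dots> \<le> C * e0" using ap C0 c unfolding g_def by (intro mult_left_mono) auto
    finally have 2: "L2 N (\<lambda>i. al i * (g i - pc K idx c0 i)) \<le> C * e0" .
    show ?thesis using L2_triangle[of N "\<lambda>i. (a i - al i) * g i" "\<lambda>i. al i * (g i - pc K idx c0 i)"] 1 2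
      by simp
  qed
  then have "L2 N (\<lambda>i. (a i - al i) * g i + al i * (g i - pc K idx c0 i)) * L2 N dd \<le> (\<delta> * G + C * e0) * L2 N dd"
    by (intro mult_right_mono L2_nonneg)
  finally have ineq: "c * (L2 N dd)^2 \<le> (\<delta> * G + C * e0) * L2 N dd" .
  have Ldd: "L2 N dd \<le> (\<delta> * G + C * e0) / c"
  proof (cases "L2 N dd = 0")
    case True then show ?thesis using d0 G0 C0 c e00 by simp
  next
    case False
    then have "L2 N dd > 0" using L2_nonneg[of N dd] by simp
    then have "c * L2 N dd \<le> \<delta> * G + C * e0" using ineq by (simp add: power2_eq_square)
    then show ?thesis using c by (simp add: field_simps)
  qed
  have "L2 N (\<lambda>i. pc K idx cb i - \<sigma> i / a i) = L2 N (\<lambda>i. dd i - (g i - pc K idx c0 i))"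
    by (intro L2_cong) (simp add: dd g_def)
  also have "\<dots> \<le> L2 N dd + L2 N (\<lambda>i. g i - pc K idx c0 i)" by (rule L2_triangle_diff)
  also have "\<dots> \<le> (\<delta> * G + C * e0) / c + e0" using Ldd ap unfolding g_def by simp
  finally show ?thesis .
qed




lemma Dd_add: "Dd N (\<lambda>j. u j + w j) i = Dd N u i + Dd N w i"
  unfolding Dd_def by (simp add: add_divide_distrib[symmetric] algebra_simps)

lemma Dd_per: "\<forall>i. w (i + int p) = w i \<Longrightarrow> Dd N w (i + int p) = Dd N w i"
  unfolding Dd_def by (metis add.commute add.left_commute)

lemma cell_char:
  fixes psc l :: "int \<Rightarrow> real" and r :: int
  assumes p: "p > 0" and N: "N > 0" and pos: "\<forall>i. psc i > 0" and per: "\<forall>i. psc (i + int p) = psc i"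
    and lb: "\<forall>i. Dd N l i = b"
  defines "P \<equiv> \<lambda>w. w \<in> Upsharp p \<and> (\<forall>s\<in>Upsharp p. ipRep p r (\<lambda>i. psc i * Dd N (\<lambda>j. l j + w j) i) (Dd N s) = 0)"
    and "\<beta> \<equiv> b * real p / (\<Sum>i\<in>{r..<r+int p}. 1 / psc i)"
  shows "\<exists>!w. P w" and "P w \<Longrightarrow> \<forall>i\<in>{r..<r+int p}. psc i * Dd N (\<lambda>j. l j + w j) i = \<beta>"
proof -
  let ?W = "{r..<r+int p}"
  have Spos: "(\<Sum>i\<in>?W. 1 / psc i) > 0" using p pos by (intro sum_pos) auto
  have Dl: "Dd N (\<lambda>j. l j + w j) i = b + Dd N w i" for w i using lb Dd_add by simp
  have fwd: "\<forall>i\<in>?W. psc i * Dd N (\<lambda>j. l j + w j) i = \<beta>" if Pw: "P w" for w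
  proof -
    have wU: "w \<in> Upsharp p" and orth: "\<forall>s\<in>Upsharp p. ipRep p r (\<lambda>i. psc i * Dd N (\<lambda>j. l j + w j) i) (Dd N s) = 0"
      using Pw unfolding P_def by auto
    have wper: "\<forall>i. w (i + int p) = w i" using wU unfolding Upsharp_def by auto
    define h where "h i = psc i * (b + Dd N w i)" for i
    define \<mu> where "\<mu> = (1 / real p) * (\<Sum>i\<in>?W. h i)"
    define g where "g i = h i - \<mu>" for i
    have g0: "(\<Sum>i\<in>?W. g i) = 0" unfolding g_def \<mu>_def using p by (simp add: sum_subtractf)
    obtain s where s: "s \<in> Upsharp p" "\<forall>i\<in>?W. Dd N s i = g i" using realize_p[OF p N g0] by blast
    have "0 = ipRep p r (\<lambda>i. psc i * Dd N (\<lambda>j. l j + w j) i) (Dd N s)" using orth s(1) by simp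
    also have "\<dots> = (1 / real p) * (\<Sum>i\<in>?W. h i * g i)"
      unfolding ipRep_def using s(2) by (simp add: Dl h_def)
    finally have "(\<Sum>i\<in>?W. h i * g i) = 0" using p by simp
    moreover have "(\<Sum>i\<in>?W. h i * g i) = (\<Sum>i\<in>?W. g i * g i) + \<mu> * (\<Sum>i\<in>?W. g i)"
    proof -
      have "(\<Sum>i\<in>?W. h i * g i) = (\<Sum>i\<in>?W. g i * g i + \<mu> * g i)"
        by (intro sum.cong refl) (simp add: g_def algebra_simps)
      then show ?thesis by (simp add: sum.distrib sum_distrib_left)
    qed
    ultimately have "(\<Sum>i\<in>?W. g i * g i) = 0" using g0 by simp
    then have gz: "\<forall>i\<in>?W. g i * g i = 0" by (subst (asm) sum_nonneg_eq_0_iff) auto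
    then have hmu: "\<forall>i\<in>?W. h i = \<mu>" unfolding g_def by simp
    have "(\<Sum>i\<in>?W. Dd N w i) = 0" by (rule Dd_sum_per[OF wper])
    moreover have "Dd N w i = \<mu> / psc i - b" if "i \<in> ?W" for i
      using hmu that pos unfolding h_def by (metis add_diff_cancel_left' less_irrefl nonzero_mult_div_cancel_left)
    ultimately have "(\<Sum>i\<in>?W. \<mu> / psc i - b) = 0" by simp
    then have "\<mu> * (\<Sum>i\<in>?W. 1 / psc i) = b * real p"
      by (simp add: sum_subtractf sum_distrib_left)
    then have "\<mu> = \<beta>" unfolding \<beta>_def using Spos by (simp add: field_simps)
    then show ?thesis using hmu unfolding h_def Dl by simp
  qed
  then show "P w \<Longrightarrow> \<forall>i\<in>?W. psc i * Dd N (\<lambda>j. l j + w j) i = \<beta>" by blast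
  have bwd: "P w" if wU: "w \<in> Upsharp p" and hb: "\<forall>i\<in>?W. psc i * Dd N (\<lambda>j. l j + w j) i = \<beta>" for w
    unfolding P_def
  proof (intro conjI ballI wU)
    fix s assume s: "s \<in> Upsharp p"
    have sper: "\<forall>i. s (i + int p) = s i" using s unfolding Upsharp_def by auto
    have "ipRep p r (\<lambda>i. psc i * Dd N (\<lambda>j. l j + w j) i) (Dd N s) = (1 / real p) * (\<Sum>i\<in>?W. \<beta> * Dd N s i)"
      unfolding ipRep_def using hb by simp
    also have "\<dots> = (1 / real p) * \<beta> * (\<Sum>i\<in>?W. Dd N s i)" by (simp add: sum_distrib_left)
    also have "\<dots> = 0" using Dd_sum_per[OF sper] by simp
    finally show "ipRep p r (\<lambda>i. psc i * Dd N (\<lambda>j. l j + w j) i) (Dd N s) = 0" .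
  qed
  show "\<exists>!w. P w"
  proof (rule ex_ex1I)
    define g where "g i = \<beta> / psc i - b" for i
    have "(\<Sum>i\<in>?W. g i) = \<beta> * (\<Sum>i\<in>?W. 1 / psc i) - b * real p"
      unfolding g_def by (simp add: sum_subtractf sum_distrib_left)
    also have "\<dots> = 0" unfolding \<beta>_def using Spos by simp
    finally have g0: "(\<Sum>i\<in>?W. g i) = 0" .
    obtain w where w: "w \<in> Upsharp p" "\<forall>i\<in>?W. Dd N w i = g i" using realize_p[OF p N g0] by blast
    have "\<forall>i\<in>?W. psc i * Dd N (\<lambda>j. l j + w j) i = \<beta>"
    proof
      fix i assume "i \<in> ?W"
      then have "Dd N w i = \<beta> / psc i - b" using w g_def by simp
      then show "psc i * Dd N (\<lambda>j. l j + w j) i = \<beta>" using pos Dl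
        by (metis add_diff_cancel_left' diff_add_cancel less_irrefl nonzero_mult_div_cancel_left
            mult.commute nonzero_divide_eq_eq)
    qed
    then show "\<exists>w. P w" using bwd w(1) by blast
  next
    fix w1 w2 assume P1: "P w1" and P2: "P w2"
    have D: "Dd N w1 i = Dd N w2 i" if "i \<in> ?W" for i
    proof -
      have "psc i * (b + Dd N w1 i) = psc i * (b + Dd N w2 i)"
        using fwd[OF P1] fwd[OF P2] that Dl by simp
      then show ?thesis using pos by (metis add_left_cancel less_irrefl mult_left_cancel)
    qed
    have U1: "w1 \<in> Upsharp p" and U2: "w2 \<in> Upsharp p" using P1 P2 unfolding P_def by auto
    define d where "d i = w1 i - w2 i" for i
    have dper: "\<forall>i. d (i + int p) = d i" using U1 U2 unfolding d_def Upsharp_def by auto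
    have dst: "d (i+1) = d i" if "i \<in> ?W" for i
      using D[OF that] eps_pos[OF N] unfolding d_def Dd_def by (simp add: algebra_simps)
    have dW: "d (r + int n) = d r" if "n \<le> p" for n
      using that
    proof (induction n)
      case (Suc n)
      then have "r + int n \<in> ?W" by auto
      moreover have e: "r + int (Suc n) = r + int n + 1" by simp
      ultimately show ?case using dst[of "r + int n"] Suc by (metis Suc_leD)
    qed simp
    have dc: "d i = d r" for i
    proof -
      have "d i = d (r + (i - r) mod int p)" using periodic_mod[OF dper, of r i] by simp
      also have "\<dots> = d (r + int (nat ((i - r) mod int p)))" using p by simp
      also have "\<dots> = d r"
      proof (intro dW)
        have "(i - r) mod int p < int p" using p by simp
        then show "nat ((i - r) mod int p) \<le> p" by (simp add: nat_le_iff)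
      qed
      finally show ?thesis .
    qed
    have "(\<Sum>i\<in>{1..int p}. d i) = 0" using U1 U2 unfolding d_def Upsharp_def by (simp add: sum_subtractf)
    moreover have "(\<Sum>i\<in>{1..int p}. d i) = (\<Sum>i\<in>{1..int p}. d r)"
      by (rule sum.cong) (rule refl, rule dc)
    ultimately have "real p * d r = 0" by simp
    then have "d r = 0" using p by simp
    then show "w1 = w2" using dc unfolding d_def by (intro ext) (metis eq_iff_diff_eq_0)
  qed
qed




definition sl :: "nat \<Rightarrow> (nat \<Rightarrow> int) \<Rightarrow> (int \<Rightarrow> real) \<Rightarrow> nat \<Rightarrow> real" where
  "sl N idx v k = Dd N v (idx k)"

lemma UH_slope:
  assumes N: "N > 0" and m: "valid_mesh N K idx" and v: "v \<in> UHper N K idx" and k: "k \<in> {1..K}"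
  shows "\<forall>i\<in>SS idx k. Dd N v i = sl N idx v k"
    and "\<forall>i. Dd N (ell N idx k v) i = sl N idx v k"
proof -
  obtain a b where ab: "\<forall>i\<in>{idx k..idx (Suc k)}. v i = a + b * Xpt N i"
    using v k unfolding UHper_def is_affine_on_def by blast
  have ep: "eps N > 0" by (rule eps_pos[OF N])
  have Db: "Dd N v i = b" if "i \<in> SS idx k" for i
  proof -
    have "v (i+1) = a + b * Xpt N (i+1)" "v i = a + b * Xpt N i" using ab that by auto
    then show ?thesis unfolding Dd_def Xpt_def using ep by (simp add: algebra_simps)
  qed
  have slb: "sl N idx v k = b" unfolding sl_def using Db mesh_step[OF m k] by simp
  show "\<forall>i\<in>SS idx k. Dd N v i = sl N idx v k" using Db slb by simp
  have st: "idx k < idx (Suc k)" by (rule mesh_step[OF m k])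
  have "ell N idx k v = (\<lambda>i. a + b * Xpt N i)"
    unfolding ell_def
  proof (rule the_equality)
    show "(\<exists>a' b'. \<forall>i. a + b * Xpt N i = a' + b' * Xpt N i) \<and> (\<forall>i\<in>{idx k..idx (Suc k)}. a + b * Xpt N i = v i)"
      using ab by auto
  next
    fix l assume l: "(\<exists>a' b'. \<forall>i. l i = a' + b' * Xpt N i) \<and> (\<forall>i\<in>{idx k..idx (Suc k)}. l i = v i)"
    then obtain a' b' where l1: "\<forall>i. l i = a' + b' * Xpt N i" by blast
    have e1: "a' + b' * Xpt N (idx k) = a + b * Xpt N (idx k)"
      using l l1 ab st by (metis atLeastAtMost_iff order_refl less_imp_le)
    have e2: "a' + b' * Xpt N (idx k + 1) = a + b * Xpt N (idx k + 1)"
    proof -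
      have "idx k + 1 \<in> {idx k..idx (Suc k)}" using st by auto
      then show ?thesis using l l1 ab by metis
    qed
    have "a' + b' * Xpt N (idx k + 1) - (a' + b' * Xpt N (idx k)) = a + b * Xpt N (idx k + 1) - (a + b * Xpt N (idx k))"
      using e1 e2 by simp
    moreover have "a' + b' * Xpt N (idx k + 1) - (a' + b' * Xpt N (idx k)) = b' * eps N" for a' b'
      unfolding Xpt_def by (simp add: algebra_simps)
    ultimately have "b' * eps N = b * eps N" by metis
    then have bb: "b' = b" using ep by simp
    then have "a' = a" using e1 by simp
    then show "l = (\<lambda>i. a + b * Xpt N i)" using l1 bb by auto
  qed
  then show "\<forall>i. Dd N (ell N idx k v) i = sl N idx v k"
    unfolding slb Dd_def Xpt_def using ep by (simp add: algebra_simps)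
qed

lemma BHQC_term:
  assumes p: "p > 0" and N: "N > 0" and m: "valid_mesh N K idx"
    and c: "c > 0" and b: "\<forall>i j. c \<le> psi i j \<and> psi i j \<le> C"
    and per: "\<forall>i j. psi (i + int N) j = psi i j \<and> psi i (j + int p) = psi i j"
    and u: "u \<in> UHper N K idx" and v: "v \<in> UHper N K idx" and k: "k \<in> {1..K}"
  shows "ipRep p (rep k) (\<lambda>i. psi_coll psi coll k i * Dd N (Rk N p psi idx rep coll k u) i)
            (Dd N (Rk N p psi idx rep coll k v))
         = psi0 p psi (coll k) * sl N idx u k * sl N idx v k"
proof -
  let ?psc = "psi_coll psi coll k"
  let ?W = "{rep k..<rep k + int p}"
  have pos: "\<forall>i. ?psc i > 0" unfolding psi_coll_def using b c by (meson order_less_le_trans)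
  have pper: "\<forall>i. ?psc (i + int p) = ?psc i" unfolding psi_coll_def using per by simp
  define P where "P l w = (w \<in> Upsharp p \<and> (\<forall>s\<in>Upsharp p. ipRep p (rep k) (\<lambda>i. ?psc i * Dd N (\<lambda>j. l j + w j) i) (Dd N s) = 0))" for l w
  define \<beta> where "\<beta> bb = bb * real p / (\<Sum>i\<in>?W. 1 / ?psc i)" for bb
  have cw: "cellw N p psi idx rep coll k x = (THE w. P (ell N idx k x) w)" for x
    unfolding cellw_def P_def ..
  have Px: "P (ell N idx k x) (cellw N p psi idx rep coll k x)"
    and chx: "\<forall>i\<in>?W. ?psc i * Dd N (Rk N p psi idx rep coll k x) i = \<beta> (sl N idx x k)"
    if x: "x \<in> UHper N K idx" for x
  proof -
    note lb = UH_slope(2)[OF N m x k]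
    have ex: "\<exists>!w. P (ell N idx k x) w"
      using cell_char(1)[OF p N pos pper lb, where r="rep k"] unfolding P_def .
    show P: "P (ell N idx k x) (cellw N p psi idx rep coll k x)" unfolding cw by (rule theI'[OF ex])
    show "\<forall>i\<in>?W. ?psc i * Dd N (Rk N p psi idx rep coll k x) i = \<beta> (sl N idx x k)"
      using cell_char(2)[OF p N pos pper lb, where r="rep k" and w="cellw N p psi idx rep coll k x"] P
      unfolding P_def \<beta>_def Rk_def by blast
  qed
  have wv: "\<forall>i. cellw N p psi idx rep coll k v (i + int p) = cellw N p psi idx rep coll k v i"
    using Px[OF v] unfolding P_def Upsharp_def by auto
  have DRv: "Dd N (Rk N p psi idx rep coll k v) i = sl N idx v k + Dd N (cellw N p psi idx rep coll k v) i" for i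
    unfolding Rk_def Dd_add using UH_slope(2)[OF N m v k] by simp
  have "ipRep p (rep k) (\<lambda>i. ?psc i * Dd N (Rk N p psi idx rep coll k u) i) (Dd N (Rk N p psi idx rep coll k v))
      = (1 / real p) * (\<Sum>i\<in>?W. \<beta> (sl N idx u k) * (sl N idx v k + Dd N (cellw N p psi idx rep coll k v) i))"
    unfolding ipRep_def DRv using chx[OF u] by simp
  also have "\<dots> = (1 / real p) * (\<beta> (sl N idx u k) * (real p * sl N idx v k)
        + \<beta> (sl N idx u k) * (\<Sum>i\<in>?W. Dd N (cellw N p psi idx rep coll k v) i))"
    by (simp add: sum.distrib sum_distrib_left distrib_left)
  also have "(\<Sum>i\<in>?W. Dd N (cellw N p psi idx rep coll k v) i) = 0" by (rule Dd_sum_per[OF wv])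
  also have "(\<Sum>i\<in>?W. 1 / ?psc i) = (\<Sum>j\<in>{1..int p}. 1 / psi (coll k) j)"
  proof -
    have "(\<Sum>i\<in>?W. 1 / ?psc i) = (\<Sum>i\<in>{1..<1 + int p}. 1 / ?psc i)"
      by (rule sum_window_periodic) (use pper in simp)
    then show ?thesis unfolding II_win psi_coll_def .
  qed
  then have "\<beta> (sl N idx u k) = sl N idx u k * psi0 p psi (coll k)"
    unfolding \<beta>_def psi0_def avgY_def by (simp add: field_simps)
  finally show ?thesis using p by (simp add: algebra_simps)
qed

lemma BHQC_formula:
  assumes p: "p > 0" and N: "N > 0" and m: "valid_mesh N K idx"
    and c: "c > 0" and b: "\<forall>i j. c \<le> psi i j \<and> psi i j \<le> C"
    and per: "\<forall>i j. psi (i + int N) j = psi i j \<and> psi i (j + int p) = psi i j"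
    and u: "u \<in> UHper N K idx" and v: "v \<in> UHper N K idx"
  shows "BHQC N p psi K idx rep coll u v = (\<Sum>k\<in>{1..K}. Hk N idx k * (psi0 p psi (coll k) * sl N idx u k * sl N idx v k))"
  unfolding BHQC_def by (intro sum.cong refl) (simp add: BHQC_term[OF p N m c b per u v])

lemma ipX_pc3:
  assumes N: "N > 0" and m: "valid_mesh N K idx"
  shows "ipX N (\<lambda>i. pc K idx A i * pc K idx B i) (pc K idx Cc) = (\<Sum>k\<in>{1..K}. Hk N idx k * (A k * B k * Cc k))"
proof -
  have "ipX N (\<lambda>i. pc K idx A i * pc K idx B i) (pc K idx Cc) = (1 / real N) * (\<Sum>k\<in>{1..K}. \<Sum>i\<in>SS idx k. A k * B k * Cc k)"
    unfolding ipX_def sum_split[OF m]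
    by (intro arg_cong[where f="\<lambda>x. _ * x"] sum.cong refl) (simp add: pc_eq[OF m])
  also have "\<dots> = (\<Sum>k\<in>{1..K}. Hk N idx k * (A k * B k * Cc k))"
    unfolding sum_distrib_left
    by (intro sum.cong refl) (simp add: Hk_card[OF m] eps_def)
  finally show ?thesis .
qed




lemma Dd_diff: "Dd N (\<lambda>j. u j - w j) i = Dd N u i - Dd N w i"
  unfolding Dd_def by (simp add: diff_divide_distrib[symmetric] algebra_simps)

lemma sum_Dd_zero: "u \<in> Uper N \<Longrightarrow> (\<Sum>i\<in>II N. Dd N u i) = 0"
proof -
  assume "u \<in> Uper N"
  then have "\<forall>i. u (i + int N) = u i" unfolding Uper_def by auto
  from Dd_sum_per[OF this, where r=1 and N=N] show ?thesis unfolding II_win .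
qed

lemma UH_D_pc:
  assumes N: "N > 0" and m: "valid_mesh N K idx" and v: "v \<in> UHper N K idx" and i: "i \<in> II N"
  shows "Dd N v i = pc K idx (sl N idx v) i"
proof -
  obtain k where k: "k \<in> {1..K}" "i \<in> SS idx k" using elem_exists[OF m i] by blast
  show ?thesis using UH_slope(1)[OF N m v k(1)] k pc_eq[OF m k] by simp
qed

lemma realize_H_sl:
  assumes N: "N > 0" and m: "valid_mesh N K idx" and g0: "(\<Sum>i\<in>II N. pc K idx cc i) = 0"
  shows "\<exists>v\<in>UHsharp N K idx. (\<forall>i\<in>II N. Dd N v i = pc K idx cc i) \<and> (\<forall>k\<in>{1..K}. sl N idx v k = cc k)"
proof -
  obtain v where v: "v \<in> UHsharp N K idx" "\<forall>i\<in>II N. Dd N v i = pc K idx cc i"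
    using realize_H[OF N m g0] by blast
  have "sl N idx v k = cc k" if k: "k \<in> {1..K}" for k
  proof -
    have "idx k \<in> SS idx k" using mesh_step[OF m k] by simp
    moreover then have "idx k \<in> II N" using elem_sub[OF m k] by auto
    ultimately show ?thesis unfolding sl_def using v(2) pc_eq[OF m k] by simp
  qed
  then show ?thesis using v by blast
qed

lemma main_core:
  fixes p :: nat and c C C' :: real and N :: nat and psi :: "int \<Rightarrow> int \<Rightarrow> real"
    and f u0 uH uHt :: "int \<Rightarrow> real" and K :: nat and idx rep coll :: "nat \<Rightarrow> int" and L C1 C4 C5 :: real
  assumes p: "p > 0" and c: "0 < c" and N: "N > 0"
  and per: "\<forall>i j. psi (i + int N) j = psi i j \<and> psi i (j + int p) = psi i j"
  and bnd: "\<forall>i j. c \<le> psi i j \<and> psi i j \<le> C"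
  and lin: "Linf2 N p (DX N psi) \<le> C'"
  and fU: "f \<in> Uper N" and f0: "avgX N f = 0"
  and m: "valid_mesh N K idx" and vs: "valid_sampling p K idx rep coll"
  and u0: "u0 \<in> Usharp N" and u0eq: "\<forall>v\<in>Uper N. ipX N (\<lambda>i. psi0 p psi i * Dd N u0 i) (Dd N v) = ipX N f v"
  and uH: "uH \<in> UHsharp N K idx" and uHeq: "\<forall>v\<in>UHsharp N K idx. BHQC N p psi K idx rep coll uH v = ipX N f v"
  and uHt: "uHt \<in> UHsharp N K idx"
  and uHteq: "\<forall>v\<in>UHsharp N K idx. ipX N (\<lambda>i. psi0 p psi i * Dd N uHt i) (Dd N v) = ipX N f v"
  defines "L \<equiv> C' * C^2 / c^2" and "C1 \<equiv> 2 * sqrt (2 / c^2 + 2 * L^2 / c^4)"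
    and "C4 \<equiv> (L / c + C * C1) / c + C1" and "C5 \<equiv> C * C1 * C4"
  shows "H1semi N (\<lambda>i. uH i - u0 i) \<le> C4 * Hmax N K idx * L2 N f
    \<and> L2 N (\<lambda>i. uH i - u0 i) \<le> C5 * (Hmax N K idx)^2 * L2 N f + L2 N (\<lambda>i. uH i - uHt i)"
proof -
  define H where "H = Hmax N K idx"
  define nf where "nf = L2 N f"
  define a where "a = psi0 p psi"
  have ep: "eps N > 0" by (rule eps_pos[OF N])
  have abnd: "c \<le> a i" "a i \<le> C" for i unfolding a_def using psi0_bounds[OF p c bnd] by auto
  have apos: "\<forall>i. a i > 0" using abnd(1) c by (meson order_less_le_trans)
  have CC: "C \<ge> c" using abnd[of 0] by simp
  have step: "\<bar>a (i+1) - a i\<bar> \<le> eps N * L" for i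
    unfolding a_def L_def by (rule psi0_step[OF N p c bnd per lin])
  have L0: "L \<ge> 0" using step[of 0] ep by (smt (verit) mult_pos_neg)
  have lip: "\<forall>x y. \<bar>a x - a y\<bar> \<le> eps N * L * \<bar>x - y\<bar>" using lip_from_step[of a, OF step] by blast
  have H0: "H \<ge> 0" unfolding H_def by (rule Hmax_nonneg[OF m])
  have nf0: "nf \<ge> 0" unfolding nf_def by (rule L2_nonneg)
  have C10: "C1 \<ge> 0" unfolding C1_def by simp
  have C40: "C4 \<ge> 0" unfolding C4_def using L0 c CC C10 by simp
  have alo: "\<forall>i. c \<le> a i" using abnd by simp
  have u0U: "u0 \<in> Uper N" using u0 unfolding Usharp_def by simp
  have uHU: "uH \<in> UHper N K idx" "uH \<in> Uper N" using uH unfolding UHsharp_def UHper_def by auto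
  have uHtU: "uHt \<in> UHper N K idx" "uHt \<in> Uper N" using uHt unfolding UHsharp_def UHper_def by auto
  have UHU: "v \<in> Uper N" if "v \<in> UHsharp N K idx" for v using that unfolding UHsharp_def UHper_def by auto
  have F0: "(\<Sum>i\<in>II N. f i) = 0" using f0 N unfolding avgX_def by simp
  obtain \<sigma> where fa: "\<forall>v\<in>Uper N. ipX N \<sigma> (Dd N v) = ipX N f v" and fz: "(\<Sum>i\<in>II N. \<sigma> i / a i) = 0"
    and finc: "\<forall>i j. 0 \<le> i \<longrightarrow> i \<le> j \<longrightarrow> \<sigma> j - \<sigma> i = - eps N * (\<Sum>l\<in>{i<..j}. f l)"
    using flux[OF N apos F0] by blast
  obtain c0 where c0: "(\<Sum>i\<in>II N. pc K idx c0 i) = 0"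
    and c0a: "L2 N (\<lambda>i. \<sigma> i / a i - pc K idx c0 i) \<le> C1 * H * nf"
    using approx[OF N m finc c alo lip L0 fz] unfolding C1_def H_def nf_def L_def by blast
  have gb: "L2 N (\<lambda>i. \<sigma> i / a i) \<le> nf / c"
  proof (rule L2_bound_const[OF N])
    fix i assume i: "i \<in> II N"
    have "\<bar>\<sigma> i\<bar> \<le> nf" unfolding nf_def by (rule flux_sup[OF finc N apos fz i])
    moreover have "\<bar>\<sigma> i / a i\<bar> = \<bar>\<sigma> i\<bar> / a i" using apos by (simp add: abs_div abs_of_pos)
    moreover have "\<bar>\<sigma> i\<bar> / a i \<le> \<bar>\<sigma> i\<bar> / c" using alo c apos
      by (intro divide_left_mono) (auto intro: mult_pos_pos)
    ultimately show "\<bar>\<sigma> i / a i\<bar> \<le> nf / c" using c by (smt (verit) divide_right_mono)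
  qed
  define dd where "dd i = Dd N u0 i - \<sigma> i / a i" for i
  have dd0: "L2 N dd = 0"
  proof -
    have "(\<Sum>i\<in>II N. dd i) = 0" unfolding dd_def using sum_Dd_zero[OF u0U] fz by (simp add: sum_subtractf)
    then obtain v where v: "v \<in> Usharp N" "\<forall>i\<in>II N. Dd N v i = dd i" using realize_sharp[OF N] by blast
    have vU: "v \<in> Uper N" using v unfolding Usharp_def by simp
    have "ipX N (\<lambda>i. a i * Dd N u0 i - \<sigma> i) (Dd N v) = 0"
      using u0eq vU fa unfolding a_def by (simp add: ipX_diff_left)
    moreover have "ipX N (\<lambda>i. a i * Dd N u0 i - \<sigma> i) (Dd N v) = ipX N (\<lambda>i. a i * dd i) dd"
    proof (intro ipX_cong)
      fix i assume "i \<in> II N"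
      have "a i \<noteq> 0" using apos by (metis less_irrefl)
      then show "a i * Dd N u0 i - \<sigma> i = a i * dd i" unfolding dd_def by (simp add: field_simps)
    qed (use v in auto)
    ultimately have "ipX N (\<lambda>i. a i * dd i) dd = 0" by simp
    then have "c * (L2 N dd)^2 \<le> 0" using ipX_lower[of N c a dd] alo unfolding L2_sq by simp
    then show ?thesis using c L2_nonneg[of N dd] by (simp add: mult_le_0_iff)
  qed
  define atc where "atc k = psi0 p psi (coll k)" for k
  have collS: "coll k \<in> SS idx k" if "k \<in> {1..K}" for k using vs that unfolding valid_sampling_def by force
  have atc_pc: "pc K idx atc i = a (coll k)" if k: "k \<in> {1..K}" and i: "i \<in> SS idx k" for k i
    using pc_eq[OF m k i] unfolding atc_def a_def by simp
  have EH: "L2 N (\<lambda>i. pc K idx (sl N idx uH) i - \<sigma> i / a i) \<le> C4 * H * nf"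
  proof -
    have galH: "\<forall>cc. (\<Sum>i\<in>II N. pc K idx cc i) = 0 \<longrightarrow>
         ipX N (\<lambda>i. pc K idx atc i * pc K idx (sl N idx uH) i - \<sigma> i) (pc K idx cc) = 0"
    proof (intro allI impI)
      fix cc assume s: "(\<Sum>i\<in>II N. pc K idx cc i) = 0"
      obtain v where v: "v \<in> UHsharp N K idx" "\<forall>i\<in>II N. Dd N v i = pc K idx cc i" "\<forall>k\<in>{1..K}. sl N idx v k = cc k"
        using realize_H_sl[OF N m s] by blast
      have vH: "v \<in> UHper N K idx" using v(1) unfolding UHsharp_def by simp
      have "BHQC N p psi K idx rep coll uH v = (\<Sum>k\<in>{1..K}. Hk N idx k * (atc k * sl N idx uH k * cc k))"
        unfolding BHQC_formula[OF p N m c bnd per uHU(1) vH] atc_def using v(3) by (intro sum.cong) auto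
      also have "\<dots> = ipX N (\<lambda>i. pc K idx atc i * pc K idx (sl N idx uH) i) (pc K idx cc)"
        by (rule ipX_pc3[OF N m, symmetric])
      finally have 1: "ipX N (\<lambda>i. pc K idx atc i * pc K idx (sl N idx uH) i) (pc K idx cc) = ipX N f v"
        using uHeq v(1) by simp
      have 2: "ipX N f v = ipX N \<sigma> (pc K idx cc)"
        using fa UHU[OF v(1)] ipX_cong[of N \<sigma> \<sigma> "Dd N v" "pc K idx cc"] v(2) by simp
      show "ipX N (\<lambda>i. pc K idx atc i * pc K idx (sl N idx uH) i - \<sigma> i) (pc K idx cc) = 0"
        using 1 2 by (simp add: ipX_diff_left)
    qed
    have alo': "\<forall>i\<in>II N. c \<le> pc K idx atc i" and ahi': "\<forall>i\<in>II N. pc K idx atc i \<le> C"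
      and del': "\<forall>i\<in>II N. \<bar>pc K idx atc i - a i\<bar> \<le> L * H"
    proof -
      have "c \<le> pc K idx atc i \<and> pc K idx atc i \<le> C \<and> \<bar>pc K idx atc i - a i\<bar> \<le> L * H" if i: "i \<in> II N" for i
      proof -
        obtain k where k: "k \<in> {1..K}" "i \<in> SS idx k" using elem_exists[OF m i] by blast
        have "\<bar>a (coll k) - a i\<bar> \<le> eps N * L * \<bar>coll k - i\<bar>" using lip by blast
        also have "\<dots> \<le> L * H"
        proof -
          have "\<bar>coll k - i\<bar> \<le> idx (Suc k) - idx k" using collS[OF k(1)] k(2) by auto
          then have "eps N * real_of_int \<bar>coll k - i\<bar> \<le> Hk N idx k"
            unfolding Hk_def using ep by (intro mult_left_mono) auto
          also have "\<dots> \<le> H" unfolding H_def by (rule Hk_le_Hmax[OF k(1)])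
          finally have "eps N * real_of_int \<bar>coll k - i\<bar> \<le> H" .
          then show ?thesis using L0 by (metis mult.assoc mult.commute mult_left_mono)
        qed
        finally show ?thesis using atc_pc[OF k] abnd by simp
      qed
      then show "\<forall>i\<in>II N. c \<le> pc K idx atc i" "\<forall>i\<in>II N. pc K idx atc i \<le> C"
        "\<forall>i\<in>II N. \<bar>pc K idx atc i - a i\<bar> \<le> L * H" by auto
    qed
    have sb: "(\<Sum>i\<in>II N. pc K idx (sl N idx uH) i) = 0"
      using sum_Dd_zero[OF uHU(2)] UH_D_pc[OF N m uHU(1)] by simp
    have "L2 N (\<lambda>i. pc K idx (sl N idx uH) i - \<sigma> i / a i) \<le> (L * H * (nf / c) + C * (C1 * H * nf)) / c + C1 * H * nf"
      by (rule energy[OF N m c alo' ahi' del' _ apos galH sb c0 c0a gb]) (use L0 H0 in simp)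
    also have "\<dots> = C4 * H * nf" unfolding C4_def using c by (simp add: field_simps)
    finally show ?thesis .
  qed
  have EHt: "L2 N (\<lambda>i. pc K idx (sl N idx uHt) i - \<sigma> i / a i) \<le> C4 * H * nf"
  proof -
    have galHt: "\<forall>cc. (\<Sum>i\<in>II N. pc K idx cc i) = 0 \<longrightarrow>
         ipX N (\<lambda>i. a i * pc K idx (sl N idx uHt) i - \<sigma> i) (pc K idx cc) = 0"
    proof (intro allI impI)
      fix cc assume s: "(\<Sum>i\<in>II N. pc K idx cc i) = 0"
      obtain v where v: "v \<in> UHsharp N K idx" "\<forall>i\<in>II N. Dd N v i = pc K idx cc i"
        using realize_H_sl[OF N m s] by blast
      have "ipX N (\<lambda>i. a i * pc K idx (sl N idx uHt) i) (pc K idx cc) = ipX N (\<lambda>i. psi0 p psi i * Dd N uHt i) (Dd N v)"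
        unfolding a_def using v(2) UH_D_pc[OF N m uHtU(1)] by (intro ipX_cong) auto
      also have "\<dots> = ipX N f v" using uHteq v(1) by simp
      also have "\<dots> = ipX N \<sigma> (pc K idx cc)"
        using fa UHU[OF v(1)] ipX_cong[of N \<sigma> \<sigma> "Dd N v" "pc K idx cc"] v(2) by simp
      finally show "ipX N (\<lambda>i. a i * pc K idx (sl N idx uHt) i - \<sigma> i) (pc K idx cc) = 0"
        by (simp add: ipX_diff_left)
    qed
    have sb: "(\<Sum>i\<in>II N. pc K idx (sl N idx uHt) i) = 0"
      using sum_Dd_zero[OF uHtU(2)] UH_D_pc[OF N m uHtU(1)] by simp
    have "L2 N (\<lambda>i. pc K idx (sl N idx uHt) i - \<sigma> i / a i) \<le> (0 * (nf / c) + C * (C1 * H * nf)) / c + C1 * H * nf"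
      by (rule energy[OF N m c _ _ _ _ apos galHt sb c0 c0a gb]) (use abnd in auto)
    also have "\<dots> \<le> C4 * H * nf" unfolding C4_def using c L0 H0 nf0 by (simp add: field_simps)
    finally show ?thesis .
  qed
  have H1: "H1semi N (\<lambda>i. uH i - u0 i) \<le> C4 * H * nf"
  proof -
    have "H1semi N (\<lambda>i. uH i - u0 i) = L2 N (\<lambda>i. (pc K idx (sl N idx uH) i - \<sigma> i / a i) - dd i)"
      unfolding H1semi_def
      by (intro L2_cong) (simp add: Dd_diff dd_def UH_D_pc[OF N m uHU(1)])
    also have "\<dots> \<le> L2 N (\<lambda>i. pc K idx (sl N idx uH) i - \<sigma> i / a i) + L2 N dd" by (rule L2_triangle_diff)
    also have "\<dots> \<le> C4 * H * nf" using EH dd0 by simp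
    finally show ?thesis .
  qed
  define e where "e i = u0 i - uHt i" for i
  have eU: "e \<in> Uper N" using u0U uHtU(2) unfolding e_def Uper_def by auto
  have De: "L2 N (Dd N e) \<le> C4 * H * nf"
  proof -
    have "L2 N (Dd N e) = L2 N (\<lambda>i. dd i - (pc K idx (sl N idx uHt) i - \<sigma> i / a i))"
      unfolding e_def by (intro L2_cong) (simp add: Dd_diff dd_def UH_D_pc[OF N m uHtU(1)])
    also have "\<dots> \<le> L2 N dd + L2 N (\<lambda>i. pc K idx (sl N idx uHt) i - \<sigma> i / a i)" by (rule L2_triangle_diff)
    also have "\<dots> \<le> C4 * H * nf" using EHt dd0 by simp
    finally show ?thesis .
  qed
  have E0: "(\<Sum>i\<in>II N. e i) = 0"
    using u0 uHt N unfolding e_def UHsharp_def Usharp_def avgX_def by (simp add: sum_subtractf)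
  obtain \<sigma>e where ea: "\<forall>v\<in>Uper N. ipX N \<sigma>e (Dd N v) = ipX N e v" and ez: "(\<Sum>i\<in>II N. \<sigma>e i / a i) = 0"
    and einc: "\<forall>i j. 0 \<le> i \<longrightarrow> i \<le> j \<longrightarrow> \<sigma>e j - \<sigma>e i = - eps N * (\<Sum>l\<in>{i<..j}. e l)"
    using flux[OF N apos E0] by blast
  obtain c1 where c1: "(\<Sum>i\<in>II N. pc K idx c1 i) = 0"
    and c1a: "L2 N (\<lambda>i. \<sigma>e i / a i - pc K idx c1 i) \<le> C1 * H * L2 N e"
    using approx[OF N m einc c alo lip L0 ez] unfolding C1_def H_def L_def by blast
  have orth: "ipX N (\<lambda>i. a i * pc K idx c1 i) (Dd N e) = 0"
  proof -
    obtain v where v: "v \<in> UHsharp N K idx" "\<forall>i\<in>II N. Dd N v i = pc K idx c1 i"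
      using realize_H_sl[OF N m c1] by blast
    have "ipX N (\<lambda>i. a i * Dd N u0 i) (Dd N v) = ipX N (\<lambda>i. a i * Dd N uHt i) (Dd N v)"
      using u0eq uHteq UHU[OF v(1)] v(1) unfolding a_def by simp
    then have "ipX N (\<lambda>i. a i * Dd N e i) (Dd N v) = 0"
      unfolding e_def Dd_diff by (simp add: right_diff_distrib ipX_diff_left)
    then have "ipX N (Dd N e) (\<lambda>i. a i * pc K idx c1 i) = 0"
      unfolding ipX_def using v(2) by (simp add: mult.commute mult.left_commute)
    then show ?thesis by (simp add: ipX_comm)
  qed
  have "(L2 N e)^2 = ipX N \<sigma>e (Dd N e)" unfolding L2_sq using ea eU by simp
  also have "ipX N \<sigma>e (Dd N e) = ipX N (\<lambda>i. a i * (\<sigma>e i / a i - pc K idx c1 i)) (Dd N e)"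
  proof -
    have "ipX N (\<lambda>i. a i * (\<sigma>e i / a i - pc K idx c1 i)) (Dd N e)
        = ipX N (\<lambda>i. \<sigma>e i - a i * pc K idx c1 i) (Dd N e)"
    proof (intro ipX_cong refl)
      fix i have "a i \<noteq> 0" using apos by (metis less_irrefl)
      then show "a i * (\<sigma>e i / a i - pc K idx c1 i) = \<sigma>e i - a i * pc K idx c1 i" by (simp add: field_simps)
    qed
    then show ?thesis using orth by (simp add: ipX_diff_left)
  qed
  also have "\<dots> \<le> L2 N (\<lambda>i. a i * (\<sigma>e i / a i - pc K idx c1 i)) * L2 N (Dd N e)" by (rule ipX_CS')
  also have "\<dots> \<le> (C * (C1 * H * L2 N e)) * (C4 * H * nf)"
  proof (intro mult_mono De L2_nonneg)
    have "L2 N (\<lambda>i. a i * (\<sigma>e i / a i - pc K idx c1 i)) \<le> C * L2 N (\<lambda>i. \<sigma>e i / a i - pc K idx c1 i)"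
    proof (intro L2_mono_pw)
      fix i
      have "\<bar>a i\<bar> \<le> C" using abnd(2)[of i] apos by (metis abs_of_pos)
      then show "\<bar>a i * (\<sigma>e i / a i - pc K idx c1 i)\<bar> \<le> C * \<bar>\<sigma>e i / a i - pc K idx c1 i\<bar>"
        by (simp add: abs_mult mult_right_mono)
    qed (use c CC in auto)
    also have "\<dots> \<le> C * (C1 * H * L2 N e)" using c1a c CC by (intro mult_left_mono) auto
    finally show "L2 N (\<lambda>i. a i * (\<sigma>e i / a i - pc K idx c1 i)) \<le> C * (C1 * H * L2 N e)" .
    show "0 \<le> C * (C1 * H * L2 N e)" using c CC C10 H0 L2_nonneg[of N e] by simp
  qed
  finally have esq: "(L2 N e)^2 \<le> C5 * H^2 * nf * L2 N e"
    unfolding C5_def by (simp add: power2_eq_square algebra_simps)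
  have eb: "L2 N e \<le> C5 * H^2 * nf"
  proof (cases "L2 N e = 0")
    case True then show ?thesis unfolding C5_def using c CC C10 C40 H0 nf0 by simp
  next
    case False
    then have "L2 N e > 0" using L2_nonneg[of N e] by simp
    then show ?thesis using esq by (simp add: power2_eq_square)
  qed
  have L2f: "L2 N (\<lambda>i. uH i - u0 i) \<le> C5 * H^2 * nf + L2 N (\<lambda>i. uH i - uHt i)"
  proof -
    have "L2 N (\<lambda>i. uH i - u0 i) = L2 N (\<lambda>i. (uH i - uHt i) - e i)" unfolding e_def by simp
    also have "\<dots> \<le> L2 N (\<lambda>i. uH i - uHt i) + L2 N e" by (rule L2_triangle_diff)
    finally show ?thesis using eb by simp
  qed
  show ?thesis using H1 L2f unfolding H_def nf_def by simp
qed


theorem theorem6p1: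
  fixes p :: nat and c_psi C_psi C'_psi :: real
  assumes "p > 0" and "0 < c_psi"
  shows "\<exists>C4 C5 :: real. \<forall>(N::nat) (psi::int \<Rightarrow> int \<Rightarrow> real) (f::int \<Rightarrow> real) (K::nat)
           (idx::nat \<Rightarrow> int) (rep::nat \<Rightarrow> int) (coll::nat \<Rightarrow> int)
           (u0::int \<Rightarrow> real) (uH::int \<Rightarrow> real) (uHt::int \<Rightarrow> real).
      N > 0
      \<and> (\<forall>i j. psi (i + int N) j = psi i j \<and> psi i (j + int p) = psi i j)
      \<and> (\<forall>i j. c_psi \<le> psi i j \<and> psi i j \<le> C_psi)
      \<and> Linf2 N p (DX N psi) \<le> C'_psi
      \<and> f \<in> Uper N \<and> avgX N f = 0
      \<and> valid_mesh N K idx \<and> valid_sampling p K idx rep coll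
      \<and> u0 \<in> Usharp N
      \<and> (\<forall>v\<in>Uper N. ipX N (\<lambda>i. psi0 p psi i * Dd N u0 i) (Dd N v) = ipX N f v)
      \<and> uH \<in> UHsharp N K idx
      \<and> (\<forall>v\<in>UHsharp N K idx. BHQC N p psi K idx rep coll uH v = ipX N f v)
      \<and> uHt \<in> UHsharp N K idx
      \<and> (\<forall>v\<in>UHsharp N K idx. ipX N (\<lambda>i. psi0 p psi i * Dd N uHt i) (Dd N v) = ipX N f v)
      \<longrightarrow> H1semi N (\<lambda>i. uH i - u0 i) \<le> C4 * Hmax N K idx * L2 N f
        \<and> L2 N (\<lambda>i. uH i - u0 i) \<le> C5 * (Hmax N K idx)^2 * L2 N f + L2 N (\<lambda>i. uH i - uHt i)"
  apply (rule exI, rule exI)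
  apply (intro allI impI)
  apply (elim conjE)
  apply (rule main_core[OF assms(1) assms(2)])
  apply assumption+
  done

end
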